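(* Let $G=(V,E)$ be an $r$-regular graph on a finite vertex set $V$ with $|V|$ even. Then $G$ is B-factorizable if and only if, for every HAP table $d\mapsto\{H(d),A(d)\}$ ($d\in\{1,\dots,r\}$), the polytope $P(G,HA)$ contains an integral point whenever it is non-empty. In particular, the complete graph on $V$ is B-factorizable if and only if for every HAP table, $P(K_{|V|},HA)$ contains an integral point whenever it is non-empty.
   Context: Let $V$ be a finite set with $|V|$ even. $K=\binom{V}{2}$ is the set of 2-element subsets of $V$. An equal partition of $V$ is an unordered pair $\{H,A\}$ of disjoint subsets with $H\cup A=V$ and $|H|=|A|=|V|/2$; $C=C(V)$ is the set of equal partitions. For $c=\{H,A\}\in C$, $B_c$ is the complete bipartite graph with parts $H$ and $A$. Vectors live in $\mathbb N^{K\cup C}$ with $\mathbb N=\{0,1,2,\dots\}$; $v|_K$ denotes the restriction to coordinates in $K$. For $E\subseteq K$, $\chi_E\in\{0,1\}^K$ is its indicator vector. For $E\subseteq K$ and $c\in C$, $\chi_{E,c}\in\mathbb N^{K\cup C}$ has $K$-components $\chi_E$ and $C$-components equal to the indicator of $c$. $PM(V)=\{\chi_{q,c}: c\in C,\ q\text{ a perfect matching of }B_c\}$. For $\mathcal M\subseteq\mathbb N^{K\cup C}$, $\mathbf N(\mathcal M)$ is the set of finite nonnegative integer combinations of elements of $\mathcal M$, and $\overline{\mathbf N}(\mathcal M)=\{v\in\mathbb N^{K\cup C}: kv\in\mathbf N(\mathcal M)\text{ for some integer }k\ge1\}$. A regular graph $G=(V,E)$ is B-factorizable if every $v\in\overline{\mathbf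 N}(PM(V))$ with $v|_K=\chi_E$ belongs to $\mathbf N(PM(V))$. For an $r$-regular graph $G=(V,E)$, a HAP table is a map assigning to each $d\in\{1,\dots,r\}$ an equal partition $\{H(d),A(d)\}\in C$. $P(G,HA)$ is the set of real vectors $(x_{e,d})_{e\in K,\,d\in\{1,\dots,r\}}$ satisfying: (1) $\sum_{d=1}^r x_{e,d}=1$ for every $e\in E$, and $x_{e,d}=0$ for every $e\in K\setminus E$ and every $d$; (2) for every $d$ and every $a\in V$, $\sum_{b\in V\setminus\{a\}}x_{\{a,b\},d}=1$; (3) $0\le x_{e,d}\le1$ for all $e\in E$ and all $d$; (4) $x_{\{a,b\},d}=0$ whenever $\{a,b\}\in E$ and $a,b$ are both in $H(d)$ or both in $A(d)$. *)

theory Defs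
  imports Complex_Main
begin

definition Kset :: "'a set \<Rightarrow> 'a set set" where
  "Kset V = {e. \<exists>a b. a \<in> V \<and> b \<in> V \<and> a \<noteq> b \<and> e = {a, b}}"

definition Cset :: "'a set \<Rightarrow> 'a set set set" where
  "Cset V = {c. \<exists>H A. c = {H, A} \<and> H \<inter> A = {} \<and> H \<union> A = V \<and> card H = card A}"

text \<open>Vectors in N^(K \<union> C): functions on the disjoint sum, zero outside K \<union> C.\<close>
type_synonym 'a vec = "'a set + 'a set set \<Rightarrow> nat"

definition idx :: "'a set \<Rightarrow> ('a set + 'a set set) set" where
  "idx V = Inl ` Kset V \<union> Inr ` Cset V"

definition chi_EC :: "'a set \<Rightarrow> 'a set set \<Rightarrow> 'a set set \<Rightarrow> 'a vec" where
  "chi_EC V E c = (\<lambda>i. case i of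
       Inl e \<Rightarrow> (if e \<in> Kset V \<and> e \<in> E then 1 else 0)
     | Inr c' \<Rightarrow> (if c' \<in> Cset V \<and> c' = c then 1 else 0))"

definition Bedges :: "'a set set \<Rightarrow> 'a set set" where
  "Bedges c = {e. \<exists>H A h a. c = {H, A} \<and> h \<in> H \<and> a \<in> A \<and> e = {h, a}}"

definition perfect_matching_B :: "'a set \<Rightarrow> 'a set set \<Rightarrow> 'a set set \<Rightarrow> bool" where
  "perfect_matching_B V c q \<longleftrightarrow> q \<subseteq> Bedges c \<and> (\<forall>v\<in>V. \<exists>!e. e \<in> q \<and> v \<in> e)"

definition PM :: "'a set \<Rightarrow> 'a vec set" where
  "PM V = {chi_EC V q c | q c. c \<in> Cset V \<and> perfect_matching_B V c q}"

definition Ncomb :: "'a vec set \<Rightarrow> 'a vec set" where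
  "Ncomb M = {v. \<exists>S coef. finite S \<and> S \<subseteq> M \<and>
                   v = (\<lambda>i. \<Sum>m\<in>S. coef m * m i)}"

definition Nbar :: "'a set \<Rightarrow> 'a vec set \<Rightarrow> 'a vec set" where
  "Nbar V M = {v. (\<forall>i. i \<notin> idx V \<longrightarrow> v i = 0) \<and>
                  (\<exists>k::nat. k \<ge> 1 \<and> (\<lambda>i. k * v i) \<in> Ncomb M)}"

definition regular_graph :: "'a set \<Rightarrow> 'a set set \<Rightarrow> nat \<Rightarrow> bool" where
  "regular_graph V E r \<longleftrightarrow> E \<subseteq> Kset V \<and> (\<forall>a\<in>V. card {e \<in> E. a \<in> e} = r)"

definition B_factorizable :: "'a set \<Rightarrow> 'a set set \<Rightarrow> bool" where
  "B_factorizable V E \<longleftrightarrow>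
     (\<forall>v \<in> Nbar V (PM V).
        (\<forall>e \<in> Kset V. v (Inl e) = (if e \<in> E then 1 else 0)) \<longrightarrow> v \<in> Ncomb (PM V))"

definition HAP_table :: "'a set \<Rightarrow> nat \<Rightarrow> (nat \<Rightarrow> 'a set set) \<Rightarrow> bool" where
  "HAP_table V r HA \<longleftrightarrow> (\<forall>d \<in> {1..r}. HA d \<in> Cset V)"

definition PGHA :: "'a set \<Rightarrow> 'a set set \<Rightarrow> nat \<Rightarrow> (nat \<Rightarrow> 'a set set)
                     \<Rightarrow> ('a set \<Rightarrow> nat \<Rightarrow> real) set" where
  "PGHA V E r HA = {x.
     (\<forall>e d. \<not> (e \<in> Kset V \<and> d \<in> {1..r}) \<longrightarrow> x e d = 0) \<and>
     (\<forall>e \<in> E. (\<Sum>d = 1..r. x e d) = 1) \<and>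
     (\<forall>e \<in> Kset V - E. \<forall>d \<in> {1..r}. x e d = 0) \<and>
     (\<forall>d \<in> {1..r}. \<forall>a \<in> V. (\<Sum>b \<in> V - {a}. x {a, b} d) = 1) \<and>
     (\<forall>e \<in> E. \<forall>d \<in> {1..r}. 0 \<le> x e d \<and> x e d \<le> 1) \<and>
     (\<forall>a b d. {a, b} \<in> E \<and> d \<in> {1..r} \<and> (\<exists>S \<in> HA d. a \<in> S \<and> b \<in> S) \<longrightarrow> x {a, b} d = 0)}"

definition integral_point :: "('a set \<Rightarrow> nat \<Rightarrow> real) \<Rightarrow> bool" where
  "integral_point x \<longleftrightarrow> (\<forall>e d. x e d \<in> \<int>)"

end

theory Submission
  imports Defs "HOL-Library.Multiset"
begin


definition lin :: "'v set \<Rightarrow> ('v \<Rightarrow> real) \<Rightarrow> ('v \<Rightarrow> real) \<Rightarrow> real" where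
  "lin I a x = (\<Sum>i\<in>I. a i * x i)"

definition comb :: "'v \<Rightarrow> ('v \<Rightarrow> real) \<times> real \<Rightarrow> ('v \<Rightarrow> real) \<times> real \<Rightarrow> ('v \<Rightarrow> real) \<times> real" where
  "comb j p q = ((\<lambda>i. (- fst q j) * fst p i + fst p j * fst q i), (- fst q j) * snd p + fst p j * snd q)"

lemma lin_comb: "lin I (fst (comb j p q)) x = (- fst q j) * lin I (fst p) x + fst p j * lin I (fst q) x"
proof -
  have "lin I (fst (comb j p q)) x = (\<Sum>i\<in>I. (- fst q j) * (fst p i * x i) + fst p j * (fst q i * x i))"
    unfolding lin_def comb_def by (rule sum.cong) (auto simp: algebra_simps)
  also have "\<dots> = (- fst q j) * lin I (fst p) x + fst p j * lin I (fst q) x"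
    by (simp only: lin_def sum.distrib sum_distrib_left)
  finally show ?thesis .
qed

lemma lin_insert: "finite I \<Longrightarrow> j \<notin> I \<Longrightarrow> lin (insert j I) a x = a j * x j + lin I a x"
  by (simp add: lin_def)

lemma lin_upd: "j \<notin> I \<Longrightarrow> lin I a (x(j:=t)) = lin I a x"
  unfolding lin_def by (rule sum.cong) auto

lemma lin_rat: "\<forall>i\<in>I. a i \<in> \<rat> \<Longrightarrow> \<forall>i. x i \<in> \<rat> \<Longrightarrow> lin I a x \<in> \<rat>"
  unfolding lin_def by (intro Rats_sum Rats_mult) auto

lemma FM:
  assumes "finite I"
  shows "finite CS \<Longrightarrow> \<forall>c\<in>CS. (\<forall>i\<in>I. fst c i \<in> \<rat>) \<and> snd c \<in> \<rat> \<Longrightarrow>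
     \<exists>x. \<forall>c\<in>CS. lin I (fst c) x \<le> snd c \<Longrightarrow>
     \<exists>x. (\<forall>i. x i \<in> \<rat>) \<and> (\<forall>c\<in>CS. lin I (fst c) x \<le> snd c)"
  using assms
proof (induction I arbitrary: CS rule: finite_induct)
  case empty
  then show ?case by (rule_tac x="\<lambda>_. 0" in exI) (auto simp: lin_def)
next
  case (insert j I)
  define Z where "Z = {c\<in>CS. fst c j = 0}"
  define P where "P = {c\<in>CS. fst c j > 0}"
  define N where "N = {c\<in>CS. fst c j < 0}"
  define CS' where "CS' = Z \<union> (\<lambda>pq. comb j (fst pq) (snd pq)) ` (P \<times> N)"
  have finP: "finite P" "finite N" "finite Z" using insert.prems(1) by (auto simp: P_def N_def Z_def)
  have fin': "finite CS'" using finP by (simp add: CS'_def)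
  have rat': "\<forall>c\<in>CS'. (\<forall>i\<in>I. fst c i \<in> \<rat>) \<and> snd c \<in> \<rat>"
  proof
    fix c assume "c \<in> CS'"
    then consider "c \<in> Z" | p q where "p \<in> P" "q \<in> N" "c = comb j p q" unfolding CS'_def by auto
    then show "(\<forall>i\<in>I. fst c i \<in> \<rat>) \<and> snd c \<in> \<rat>"
    proof cases
      case 1 then show ?thesis using insert.prems(2) by (auto simp: Z_def)
    next
      case 2
      then have "p \<in> CS" "q \<in> CS" by (auto simp: P_def N_def)
      then show ?thesis using insert.prems(2) 2 by (auto simp: comb_def)
    qed
  qed
  obtain x where x: "\<forall>c\<in>CS. lin (insert j I) (fst c) x \<le> snd c" using insert.prems(3) by blast
  have "\<forall>c\<in>CS'. lin I (fst c) x \<le> snd c"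
  proof
    fix c assume "c \<in> CS'"
    then consider "c \<in> Z" | p q where "p \<in> P" "q \<in> N" "c = comb j p q" unfolding CS'_def by auto
    then show "lin I (fst c) x \<le> snd c"
    proof cases
      case 1 then show ?thesis using x insert.hyps by (auto simp: Z_def lin_insert)
    next
      case 2
      have hp: "fst p j * x j + lin I (fst p) x \<le> snd p" using x 2 insert.hyps by (auto simp: P_def lin_insert)
      have hq: "fst q j * x j + lin I (fst q) x \<le> snd q" using x 2 insert.hyps by (auto simp: N_def lin_insert)
      have a: "fst p j > 0" "fst q j < 0" using 2 by (auto simp: P_def N_def)
      have "(- fst q j) * (fst p j * x j + lin I (fst p) x) \<le> (- fst q j) * snd p"
        using hp a by (intro mult_left_mono) auto
      moreover have "fst p j * (fst q j * x j + lin I (fst q) x) \<le> fst p j * snd q"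
        using hq a by (intro mult_left_mono) auto
      ultimately have "(- fst q j) * lin I (fst p) x + fst p j * lin I (fst q) x \<le> (- fst q j) * snd p + fst p j * snd q"
        by (simp add: algebra_simps)
      then show ?thesis using 2 by (simp only: lin_comb) (simp add: comb_def)
    qed
  qed
  then obtain y where y: "\<forall>i. y i \<in> \<rat>" "\<forall>c\<in>CS'. lin I (fst c) y \<le> snd c"
    using insert.IH[OF fin' rat'] by blast
  define bnd where "bnd c = (snd c - lin I (fst c) y) / fst c j" for c
  have bndrat: "bnd c \<in> \<rat>" if "c \<in> CS" for c
    using insert.prems(2) that y(1) unfolding bnd_def by (intro Rats_divide Rats_diff lin_rat) auto
  have key: "bnd q \<le> bnd p" if "p \<in> P" "q \<in> N" for p q
  proof -
    have "lin I (fst (comb j p q)) y \<le> snd (comb j p q)" using y(2) that unfolding CS'_def by (metis (no_types, lifting) UnI2 fst_conv image_eqI mem_Sigma_iff snd_conv)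
    then have h: "(- fst q j) * lin I (fst p) y + fst p j * lin I (fst q) y \<le> (- fst q j) * snd p + fst p j * snd q"
      by (simp only: lin_comb) (simp add: comb_def)
    have a: "fst p j > 0" "fst q j < 0" using that by (auto simp: P_def N_def)
    have "(snd q - lin I (fst q) y) / fst q j \<le> (snd p - lin I (fst p) y) / fst p j"
    proof -
      have "(snd p - lin I (fst p) y) * fst q j \<le> (snd q - lin I (fst q) y) * fst p j"
        using h by (simp add: algebra_simps)
      then show ?thesis using a by (simp add: divide_simps)
    qed
    then show ?thesis by (simp add: bnd_def)
  qed
  define t where "t = (if N = {} then (if P = {} then 0 else Min (bnd ` P)) else Max (bnd ` N))"
  have trat: "t \<in> \<rat>"
  proof -
    have "Max (bnd ` N) \<in> \<rat>" if "N \<noteq> {}"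
    proof -
      have "Max (bnd ` N) \<in> bnd ` N" using finP that by (intro Max_in) auto
      then obtain c where "c \<in> N" "Max (bnd ` N) = bnd c" by auto
      then show ?thesis using bndrat by (auto simp: N_def)
    qed
    moreover have "Min (bnd ` P) \<in> \<rat>" if "P \<noteq> {}"
    proof -
      have "Min (bnd ` P) \<in> bnd ` P" using finP that by (intro Min_in) auto
      then obtain c where "c \<in> P" "Min (bnd ` P) = bnd c" by auto
      then show ?thesis using bndrat by (auto simp: P_def)
    qed
    ultimately show ?thesis unfolding t_def by auto
  qed
  have tP: "t \<le> bnd p" if "p \<in> P" for p
  proof (cases "N = {}")
    case True then show ?thesis using that finP by (auto simp: t_def)
  next
    case False
    then have "Max (bnd ` N) \<in> bnd ` N" using finP by (intro Max_in) auto
    then obtain q where "q \<in> N" "Max (bnd ` N) = bnd q" by auto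
    then show ?thesis using False key[OF that \<open>q \<in> N\<close>] by (simp add: t_def)
  qed
  have tN: "bnd q \<le> t" if "q \<in> N" for q
    using that finP by (auto simp: t_def)
  show ?case
  proof (intro exI conjI allI ballI)
    fix i show "(y(j:=t)) i \<in> \<rat>" using y(1) trat by auto
  next
    fix c assume c: "c \<in> CS"
    have e: "lin (insert j I) (fst c) (y(j:=t)) = fst c j * t + lin I (fst c) y"
      using insert.hyps by (simp add: lin_insert lin_upd)
    consider "fst c j = 0" | "fst c j > 0" | "fst c j < 0" by linarith
    then show "lin (insert j I) (fst c) (y(j:=t)) \<le> snd c"
    proof cases
      case 1
      then have "c \<in> CS'" using c by (auto simp: CS'_def Z_def)
      then show ?thesis using e 1 y(2) by auto
    next
      case 2
      then have "t \<le> bnd c" using tP c by (auto simp: P_def)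
      then show ?thesis using e 2 by (simp add: bnd_def pos_le_divide_eq algebra_simps)
    next
      case 3
      then have "bnd c \<le> t" using tN c by (auto simp: N_def)
      then show ?thesis using e 3 by (simp add: bnd_def neg_divide_le_eq algebra_simps)
    qed
  qed
qed


lemma hall:
  fixes S :: "'i \<Rightarrow> 'b set"
  assumes "finite I" "\<forall>i\<in>I. finite (S i)" "\<forall>J\<subseteq>I. card J \<le> card (\<Union>(S ` J))"
  shows "\<exists>f. (\<forall>i\<in>I. f i \<in> S i) \<and> inj_on f I"
  using assms
proof (induction "card I" arbitrary: I S rule: less_induct)
  case less
  show ?case
  proof (cases "\<exists>J. J \<subseteq> I \<and> J \<noteq> {} \<and> J \<noteq> I \<and> card (\<Union>(S ` J)) \<le> card J")
    case True
    then obtain J where J: "J \<subseteq> I" "J \<noteq> {}" "J \<noteq> I" "card (\<Union>(S ` J)) \<le> card J" by blast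
    have finJ: "finite J" using J less.prems(1) finite_subset by blast
    have cJ: "card J < card I" using J less.prems(1) by (meson psubsetI psubset_card_mono)
    obtain f1 where f1: "\<forall>i\<in>J. f1 i \<in> S i" "inj_on f1 J"
    proof -
      have "\<forall>i\<in>J. finite (S i)" using less.prems(2) J(1) by auto
      moreover have "\<forall>K\<subseteq>J. card K \<le> card (\<Union>(S ` K))" using less.prems(3) J(1) by auto
      ultimately show ?thesis using less.hyps[OF cJ finJ] that by blast
    qed
    define U where "U = \<Union>(S ` J)"
    define S' where "S' i = S i - U" for i
    have finU: "finite U" unfolding U_def using finJ J(1) less.prems(2) by auto
    have cU: "card U = card J" using J(4) less.prems(3) J(1) unfolding U_def by (simp add: le_antisym)
    have c2: "card (I - J) < card I" using J less.prems(1)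
      by (metis Diff_empty Diff_subset card_Diff_subset card_gt_0_iff diff_less finJ finite_subset le_neq_implies_less
          subset_empty)
    have "\<exists>f. (\<forall>i\<in>I - J. f i \<in> S' i) \<and> inj_on f (I - J)"
    proof (rule less.hyps[OF c2])
      show "finite (I - J)" using less.prems(1) by simp
      show "\<forall>i\<in>I - J. finite (S' i)" using less.prems(2) by (auto simp: S'_def)
      show "\<forall>K\<subseteq>I - J. card K \<le> card (\<Union> (S' ` K))"
      proof (intro allI impI)
        fix K assume K: "K \<subseteq> I - J"
        have finK: "finite K" using K less.prems(1) finite_subset by blast
        have eq: "\<Union>(S' ` K) = \<Union>(S ` (K \<union> J)) - U" unfolding S'_def U_def by auto
        have fin2: "finite (\<Union>(S ` (K \<union> J)))" using K J less.prems(1,2) finK finJ by auto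
        have sub: "U \<subseteq> \<Union>(S ` (K \<union> J))" unfolding U_def by auto
        have "K \<union> J \<subseteq> I" using K J(1) by auto
        then have "card (K \<union> J) \<le> card (\<Union>(S ` (K \<union> J)))" using less.prems(3) by blast
        moreover have "card (K \<union> J) = card K + card J" using K finK finJ by (subst card_Un_disjoint) auto
        moreover have "card (\<Union>(S' ` K)) = card (\<Union>(S ` (K \<union> J))) - card U"
          using eq sub fin2 by (simp add: card_Diff_subset finite_subset)
        ultimately show "card K \<le> card (\<Union> (S' ` K))" using cU by linarith
      qed
    qed
    then obtain f2 where f2: "\<forall>i\<in>I - J. f2 i \<in> S' i" "inj_on f2 (I - J)" by blast
    define f where "f i = (if i \<in> J then f1 i else f2 i)" for i
    show ?thesis
    proof (intro exI conjI)
      show "\<forall>i\<in>I. f i \<in> S i" using f1 f2 by (auto simp: f_def S'_def)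
      show "inj_on f I"
      proof (rule inj_onI)
        fix i i' assume ii: "i \<in> I" "i' \<in> I" "f i = f i'"
        have u1: "f1 i \<in> U" if "i \<in> J" for i using f1 that unfolding U_def by auto
        have u2: "f2 i \<notin> U" if "i \<in> I - J" for i using f2 that unfolding S'_def by auto
        show "i = i'"
        proof (cases "i \<in> J"; cases "i' \<in> J")
          assume "i \<in> J" "i' \<in> J" then show ?thesis using ii(3) f1(2) by (simp add: f_def inj_on_def)
        next
          assume a: "i \<in> J" "i' \<notin> J"
          then have "f1 i \<in> U" "f2 i' \<notin> U" using u1 u2 ii(2) by auto
          then show ?thesis using ii(3) a by (simp add: f_def)
        next
          assume a: "i \<notin> J" "i' \<in> J"
          then have "f1 i' \<in> U" "f2 i \<notin> U" using u1 u2 ii(1) by auto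
          then show ?thesis using ii(3) a by (simp add: f_def)
        next
          assume a: "i \<notin> J" "i' \<notin> J"
          then show ?thesis using ii f2(2) by (simp add: f_def inj_on_def)
        qed
      qed
    qed
  next
    case False
    show ?thesis
    proof (cases "I = {}")
      case True then show ?thesis by auto
    next
      case ne: False
      then obtain i0 where i0: "i0 \<in> I" by blast
      have "{i0} \<subseteq> I" using i0 by auto
      then have "card {i0} \<le> card (\<Union>(S ` {i0}))" using less.prems(3) by blast
      then have "1 \<le> card (S i0)" by simp
      then have "S i0 \<noteq> {}" by auto
      then obtain x where x: "x \<in> S i0" by blast
      define S' where "S' i = S i - {x}" for i
      have c2: "card (I - {i0}) < card I" using i0 less.prems(1) by (meson card_Diff1_less)
      have "\<exists>f. (\<forall>i\<in>I - {i0}. f i \<in> S' i) \<and> inj_on f (I - {i0})"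
      proof (rule less.hyps[OF c2])
        show "finite (I - {i0})" using less.prems(1) by simp
        show "\<forall>i\<in>I - {i0}. finite (S' i)" using less.prems(2) by (auto simp: S'_def)
        show "\<forall>K\<subseteq>I - {i0}. card K \<le> card (\<Union> (S' ` K))"
        proof (intro allI impI)
          fix K assume K: "K \<subseteq> I - {i0}"
          show "card K \<le> card (\<Union> (S' ` K))"
          proof (cases "K = {}")
            case True then show ?thesis by simp
          next
            case Kne: False
            have finK: "finite K" using K less.prems(1) finite_subset by blast
            have "K \<noteq> I" using K i0 by auto
            moreover have "K \<subseteq> I" using K by auto
            ultimately have "card K < card (\<Union>(S ` K))" using False Kne by (meson not_le)
            moreover have "\<Union>(S' ` K) = \<Union>(S ` K) - {x}" unfolding S'_def by auto
            moreover have "finite (\<Union>(S ` K))" using finK K less.prems(2) by auto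
            ultimately show ?thesis using card_Diff1_le[of "\<Union>(S ` K)" x] card_Diff_singleton_if[of "\<Union>(S ` K)" x] by (auto split: if_splits)
          qed
        qed
      qed
      then obtain f' where f': "\<forall>i\<in>I - {i0}. f' i \<in> S' i" "inj_on f' (I - {i0})" by blast
      show ?thesis
      proof (intro exI conjI)
        show "\<forall>i\<in>I. (f'(i0:=x)) i \<in> S i" using f' x by (auto simp: S'_def)
        show "inj_on (f'(i0:=x)) I"
        proof (rule inj_onI)
          fix i i' assume ii: "i \<in> I" "i' \<in> I" "(f'(i0:=x)) i = (f'(i0:=x)) i'"
          have nx: "f' j \<noteq> x" if "j \<in> I - {i0}" for j using f'(1) that by (auto simp: S'_def)
          show "i = i'"
          proof (cases "i = i0"; cases "i' = i0")
            assume "i \<noteq> i0" "i' \<noteq> i0" then show ?thesis using ii f'(2) by (auto simp: inj_on_def)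
          qed (use ii nx in auto)
        qed
      qed
    qed
  qed
qed


lemma Cset_D: "c \<in> Cset V \<Longrightarrow> \<exists>H A. c = {H, A} \<and> H \<inter> A = {} \<and> H \<union> A = V \<and> card H = card A"
  by (auto simp: Cset_def)

lemma Bedges_D:
  assumes "c \<in> Cset V" "e \<in> Bedges c"
  shows "\<exists>H A h a. c = {H, A} \<and> H \<inter> A = {} \<and> H \<union> A = V \<and> h \<in> H \<and> a \<in> A \<and> e = {h, a}"
proof -
  obtain H A h a where 1: "c = {H, A}" "h \<in> H" "a \<in> A" "e = {h, a}" using assms(2) by (auto simp: Bedges_def)
  obtain H0 A0 where 2: "c = {H0, A0}" "H0 \<inter> A0 = {}" "H0 \<union> A0 = V" using Cset_D[OF assms(1)] by blast
  have "(H = H0 \<and> A = A0) \<or> (H = A0 \<and> A = H0)" using 1(1) 2(1) by (auto simp: doubleton_eq_iff)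
  then show ?thesis using 1 2 by auto
qed

lemma Bedges_D2:
  assumes "c \<in> Cset V" "{a, b} \<in> Bedges c"
  shows "a \<noteq> b \<and> a \<in> V \<and> b \<in> V \<and> \<not> (\<exists>S\<in>c. a \<in> S \<and> b \<in> S)"
proof -
  obtain H A h a' where 1: "c = {H, A}" "H \<inter> A = {}" "H \<union> A = V" "h \<in> H" "a' \<in> A" "{a, b} = {h, a'}"
    using Bedges_D[OF assms] by blast
  have "(a = h \<and> b = a') \<or> (a = a' \<and> b = h)" using 1(6) by (auto simp: doubleton_eq_iff)
  then show ?thesis using 1 by auto
qed

lemma Bedges_I:
  assumes "c \<in> Cset V" "a \<in> V" "b \<in> V" "\<not> (\<exists>S\<in>c. a \<in> S \<and> b \<in> S)"
  shows "{a, b} \<in> Bedges c"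
proof -
  obtain H A where 1: "c = {H, A}" "H \<inter> A = {}" "H \<union> A = V" using Cset_D[OF assms(1)] by blast
  have "(a \<in> H \<and> b \<in> A) \<or> (a \<in> A \<and> b \<in> H)" using 1 assms(2-4) by auto
  then show ?thesis
  proof
    assume "a \<in> H \<and> b \<in> A" then show ?thesis unfolding Bedges_def using 1(1) by blast
  next
    assume h: "a \<in> A \<and> b \<in> H"
    have "{a, b} = {b, a}" by (rule insert_commute)
    then show ?thesis unfolding Bedges_def using 1(1) h by blast
  qed
qed

lemma Bedges_Kset: "c \<in> Cset V \<Longrightarrow> e \<in> Bedges c \<Longrightarrow> e \<in> Kset V"
  using Bedges_D[of c V e] unfolding Kset_def by blast

lemma sum_ind: "finite B \<Longrightarrow> (\<Sum>b\<in>B. if P b then 1 else 0) = (of_nat (card {b\<in>B. P b}) :: 'n::semiring_1)"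
proof -
  assume "finite B"
  have "(\<Sum>b\<in>B. if P b then 1 else (0::'n)) = (\<Sum>b\<in>{b\<in>B. P b}. 1)"
    using \<open>finite B\<close> by (simp add: sum.If_cases Int_def)
  then show ?thesis by simp
qed

lemma pm_row_card:
  assumes "finite V" "c \<in> Cset V" "perfect_matching_B V c q" "a \<in> V"
  shows "card {b\<in>V-{a}. {a,b} \<in> q} = 1"
proof -
  obtain e where e: "e \<in> q" "a \<in> e" and u: "\<And>e'. e' \<in> q \<Longrightarrow> a \<in> e' \<Longrightarrow> e' = e"
    using assms(3,4) unfolding perfect_matching_B_def by blast
  have eB: "e \<in> Bedges c" using e assms(3) unfolding perfect_matching_B_def by blast
  obtain H A h a' where 1: "c = {H, A}" "H \<inter> A = {}" "H \<union> A = V" "h \<in> H" "a' \<in> A" "e = {h, a'}"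
    using Bedges_D[OF assms(2) eB] by blast
  have "a = h \<or> a = a'" using 1(6) e(2) by blast
  then obtain b0 where b0: "e = {a, b0}" "b0 \<noteq> a" "b0 \<in> V"
  proof
    assume "a = h" then show ?thesis using that[of a'] 1 by blast
  next
    assume "a = a'" then show ?thesis using that[of h] 1 by (metis UnI1 disjoint_iff insert_commute)
  qed
  have S: "{b\<in>V-{a}. {a,b} \<in> q} = {b0}"
  proof (intro equalityI subsetI)
    fix b assume "b \<in> {b\<in>V-{a}. {a,b} \<in> q}"
    then have "{a,b} = e" "b \<noteq> a" using u by auto
    then show "b \<in> {b0}" using b0 by (auto simp: doubleton_eq_iff)
  next
    fix b assume "b \<in> {b0}"
    then show "b \<in> {b\<in>V-{a}. {a,b} \<in> q}" using b0 e(1) by simp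
  qed
  show ?thesis unfolding S by simp
qed

lemma pm_row:
  assumes "finite V" "c \<in> Cset V" "perfect_matching_B V c q" "a \<in> V"
  shows "(\<Sum>b\<in>V-{a}. if {a,b} \<in> q then 1 else 0) = (1 :: 'n::semiring_1)"
proof -
  have "(\<Sum>b\<in>V-{a}. if {a,b} \<in> q then 1 else 0) = (of_nat (card {b\<in>V-{a}. {a,b} \<in> q}) :: 'n)"
    using assms(1) by (intro sum_ind) simp
  then show ?thesis using pm_row_card[OF assms] by simp
qed

lemma side_sum:
  fixes w :: "'a set \<Rightarrow> nat"
  assumes "c = {X, Y}" "X \<inter> Y = {}" "X \<union> Y = V" "finite V" "c \<in> Cset V"
    and supp: "\<forall>e. 0 < w e \<longrightarrow> e \<in> Bedges c" and a: "a \<in> X"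
  shows "(\<Sum>b\<in>V-{a}. w {a,b}) = (\<Sum>b\<in>Y. w {a,b})"
proof -
  have "V - {a} = (X - {a}) \<union> Y" using assms(2,3) a by auto
  moreover have z: "w {a,b} = 0" if "b \<in> X - {a}" for b
  proof (rule ccontr)
    assume "w {a,b} \<noteq> 0"
    then have "{a,b} \<in> Bedges c" using supp by auto
    then show False using Bedges_D2[OF assms(5)] a that assms(1) by blast
  qed
  moreover have "finite X" "finite Y" using assms(3,4) by (auto intro: finite_subset)
  ultimately show ?thesis using assms(2) by (simp add: sum.union_disjoint Int_Diff sum.neutral Diff_Int_distrib2)
qed


lemma pm_exists:
  fixes w :: "'a set \<Rightarrow> nat"
  assumes fin: "finite V" and c: "c \<in> Cset V"
    and supp: "\<forall>e. 0 < w e \<longrightarrow> e \<in> Bedges c"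
    and row: "\<forall>a\<in>V. (\<Sum>b\<in>V-{a}. w {a,b}) = k" and k: "0 < k"
  shows "\<exists>q. perfect_matching_B V c q \<and> (\<forall>e\<in>q. 0 < w e)"
proof -
  obtain H A where HA: "c = {H, A}" "H \<inter> A = {}" "H \<union> A = V" "card H = card A" using Cset_D[OF c] by blast
  have finH: "finite H" and finA: "finite A" using HA(3) fin by (auto intro: finite_subset)
  have sH: "(\<Sum>b\<in>A. w {h,b}) = k" if "h \<in> H" for h
    using side_sum[OF HA(1,2,3) fin c supp that] row that HA(3) by auto
  have sA: "(\<Sum>b\<in>H. w {a,b}) = k" if "a \<in> A" for a
  proof -
    have "c = {A, H}" "A \<inter> H = {}" "A \<union> H = V" using HA by auto
    then show ?thesis using side_sum[OF _ _ _ fin c supp that] row that HA(3) by auto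
  qed
  define S where "S h = {a\<in>A. 0 < w {h,a}}" for h
  have "\<exists>f. (\<forall>h\<in>H. f h \<in> S h) \<and> inj_on f H"
  proof (rule hall[OF finH])
    show "\<forall>i\<in>H. finite (S i)" using finA by (auto simp: S_def)
    show "\<forall>J\<subseteq>H. card J \<le> card (\<Union>(S ` J))"
    proof (intro allI impI)
      fix J assume J: "J \<subseteq> H"
      define N where "N = \<Union>(S ` J)"
      have finJ: "finite J" using J finH finite_subset by blast
      have NA: "N \<subseteq> A" by (auto simp: N_def S_def)
      have finN: "finite N" using NA finA finite_subset by blast
      have "k * card J = (\<Sum>h\<in>J. (\<Sum>a\<in>A. w {h,a}))" using sH J by (simp add: subset_eq)
      also have "\<dots> = (\<Sum>h\<in>J. (\<Sum>a\<in>N. w {h,a}))"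
      proof (rule sum.cong[OF refl])
        fix h assume h: "h \<in> J"
        show "(\<Sum>a\<in>A. w {h,a}) = (\<Sum>a\<in>N. w {h,a})"
        proof (rule sum.mono_neutral_right[OF finA NA])
          show "\<forall>a\<in>A - N. w {h, a} = 0" using h by (auto simp: N_def S_def)
        qed
      qed
      also have "\<dots> = (\<Sum>a\<in>N. (\<Sum>h\<in>J. w {h,a}))" by (rule sum.swap)
      also have "\<dots> \<le> (\<Sum>a\<in>N. (\<Sum>h\<in>H. w {a,h}))"
      proof (rule sum_mono)
        fix a assume "a \<in> N"
        have "(\<Sum>h\<in>J. w {h,a}) = (\<Sum>h\<in>J. w {a,h})" by (simp add: insert_commute)
        also have "\<dots> \<le> (\<Sum>h\<in>H. w {a,h})" using J finH by (intro sum_mono2) auto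
        finally show "(\<Sum>h\<in>J. w {h,a}) \<le> (\<Sum>h\<in>H. w {a,h})" .
      qed
      also have "\<dots> = k * card N" using sA NA by (simp add: subset_eq)
      finally have "k * card J \<le> k * card N" .
      then show "card J \<le> card (\<Union>(S ` J))" using k by (simp add: N_def)
    qed
  qed
  then obtain f where f: "\<forall>h\<in>H. f h \<in> S h" "inj_on f H" by blast
  have fA: "f ` H \<subseteq> A" using f(1) by (auto simp: S_def)
  have fH: "f ` H = A"
    using card_subset_eq[OF finA fA] card_image[OF f(2)] HA(4) by simp
  define q where "q = (\<lambda>h. {h, f h}) ` H"
  show ?thesis
  proof (intro exI conjI)
    show "\<forall>e\<in>q. 0 < w e" using f(1) by (auto simp: q_def S_def)
    show "perfect_matching_B V c q"
      unfolding perfect_matching_B_def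
    proof (intro conjI ballI)
      show "q \<subseteq> Bedges c" unfolding q_def Bedges_def using HA(1) fA by blast
      fix v assume v: "v \<in> V"
      show "\<exists>!e. e \<in> q \<and> v \<in> e"
      proof (cases "v \<in> H")
        case True
        show ?thesis
        proof (rule ex1I[of _ "{v, f v}"])
          show "{v, f v} \<in> q \<and> v \<in> {v, f v}" using True by (auto simp: q_def)
          fix e assume e: "e \<in> q \<and> v \<in> e"
          then obtain h where h: "h \<in> H" "e = {h, f h}" by (auto simp: q_def)
          have "v = h \<or> v = f h" using e h by auto
          moreover have "f h \<in> A" using h fA by auto
          ultimately have "v = h" using True HA(2) by auto
          then show "e = {v, f v}" using h by simp
        qed
      next
        case False
        then have "v \<in> A" using v HA(3) by auto
        then obtain h0 where h0: "h0 \<in> H" "v = f h0" using fH by (metis imageE)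
        show ?thesis
        proof (rule ex1I[of _ "{h0, v}"])
          show "{h0, v} \<in> q \<and> v \<in> {h0, v}" using h0 by (auto simp: q_def)
          fix e assume e: "e \<in> q \<and> v \<in> e"
          then obtain h where h: "h \<in> H" "e = {h, f h}" by (auto simp: q_def)
          have "v = h \<or> v = f h" using e h by auto
          then have "v = f h" using False h(1) by auto
          then have "h = h0" using f(2) h0 h(1) by (metis inj_onD)
          then show "e = {h0, v}" using h h0 by simp
        qed
      qed
    qed
  qed
qed

lemma decomp:
  fixes w :: "'a set \<Rightarrow> nat"
  assumes fin: "finite V" and c: "c \<in> Cset V"
  shows "(\<forall>e. 0 < w e \<longrightarrow> e \<in> Bedges c) \<Longrightarrow> (\<forall>a\<in>V. (\<Sum>b\<in>V-{a}. w {a,b}) = k) \<Longrightarrow>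
    \<exists>Qs. length Qs = k \<and> (\<forall>q\<in>set Qs. perfect_matching_B V c q \<and> (\<forall>e\<in>q. 0 < w e)) \<and>
      (\<forall>e. w e = sum_list (map (\<lambda>q. if e \<in> q then 1 else 0) Qs))"
proof (induction k arbitrary: w)
  case 0
  have "w e = 0" for e
  proof (rule ccontr)
    assume "w e \<noteq> 0"
    then have "e \<in> Bedges c" using 0 by auto
    then obtain h a where 1: "e = {h, a}" unfolding Bedges_def by blast
    have hV: "h \<in> V" and aV: "a \<in> V - {h}" using Bedges_D2[OF c] \<open>e \<in> Bedges c\<close> 1 by auto
    have "(\<Sum>b\<in>V-{h}. w {h,b}) = 0" using 0 hV by auto
    then have "w {h,a} = 0" using aV fin by simp
    then show False using \<open>w e \<noteq> 0\<close> 1 by simp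
  qed
  then show ?case by (intro exI[of _ "[]"]) auto
next
  case (Suc k)
  obtain q where q: "perfect_matching_B V c q" "\<forall>e\<in>q. 0 < w e"
    using pm_exists[OF fin c Suc.prems(1) Suc.prems(2)] by auto
  define w' where "w' e = w e - (if e \<in> q then 1 else 0)" for e
  have le: "(if e \<in> q then 1 else 0) \<le> w e" for e using q(2) by auto
  have s1: "\<forall>e. 0 < w' e \<longrightarrow> e \<in> Bedges c" using Suc.prems(1) by (auto simp: w'_def)
  have s2: "\<forall>a\<in>V. (\<Sum>b\<in>V-{a}. w' {a,b}) = k"
  proof
    fix a assume a: "a \<in> V"
    have "(\<Sum>b\<in>V-{a}. w' {a,b}) = (\<Sum>b\<in>V-{a}. w {a,b}) - (\<Sum>b\<in>V-{a}. if {a,b} \<in> q then 1 else 0)"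
      unfolding w'_def using le by (intro sum_subtractf_nat) auto
    also have "\<dots> = Suc k - 1"
    proof -
      have "(\<Sum>b\<in>V-{a}. if {a,b} \<in> q then 1 else 0) = (1::nat)" by (rule pm_row[OF fin c q(1) a])
      then show ?thesis using Suc.prems(2) a by simp
    qed
    finally show "(\<Sum>b\<in>V-{a}. w' {a,b}) = k" by simp
  qed
  obtain Qs where Qs: "length Qs = k" "\<forall>q\<in>set Qs. perfect_matching_B V c q \<and> (\<forall>e\<in>q. 0 < w' e)"
    "\<forall>e. w' e = sum_list (map (\<lambda>q. if e \<in> q then 1 else 0) Qs)"
    using Suc.IH[OF s1 s2] by blast
  show ?case
  proof (rule exI[of _ "q # Qs"], intro conjI)
    show "length (q # Qs) = Suc k" using Qs by simp
  next
    show "\<forall>q'\<in>set (q # Qs). perfect_matching_B V c q' \<and> (\<forall>e\<in>q'. 0 < w e)"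
      using q Qs(2) by (auto simp: w'_def split: if_splits)
  next
    show "\<forall>e. w e = sum_list (map (\<lambda>q. if e \<in> q then 1 else 0) (q # Qs))"
    proof
    fix e
    show "w e = sum_list (map (\<lambda>q. if e \<in> q then 1 else 0) (q # Qs))"
      using spec[OF Qs(3), of e] le[of e] by (cases "e \<in> q") (simp_all add: w'_def)
    qed
  qed
qed


lemma chi_Inl: "e \<in> Kset V \<Longrightarrow> chi_EC V q c (Inl e) = (if e \<in> q then 1 else 0)"
  by (simp add: chi_EC_def)

lemma chi_Inr: "c' \<in> Cset V \<Longrightarrow> chi_EC V q c (Inr c') = (if c' = c then 1 else 0)"
  by (simp add: chi_EC_def)

lemma chi_le1: "chi_EC V q c i \<le> 1"
  by (simp add: chi_EC_def split: sum.splits)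

lemma PM_D: "m \<in> PM V \<Longrightarrow> \<exists>q c. m = chi_EC V q c \<and> c \<in> Cset V \<and> perfect_matching_B V c q"
  by (auto simp: PM_def)

lemma pm_Kset: "c \<in> Cset V \<Longrightarrow> perfect_matching_B V c q \<Longrightarrow> e \<in> q \<Longrightarrow> e \<in> Kset V"
  using Bedges_Kset unfolding perfect_matching_B_def by blast

lemma Ncomb_zero: "(\<lambda>i. 0) \<in> Ncomb M"
  unfolding Ncomb_def by (rule CollectI, rule exI[of _ "{}"]) auto

lemma Ncomb_elem: "m \<in> M \<Longrightarrow> m \<in> Ncomb M"
  unfolding Ncomb_def by (rule CollectI, rule exI[of _ "{m}"], rule exI[of _ "\<lambda>_. 1"]) auto

lemma Ncomb_add:
  assumes "v1 \<in> Ncomb M" "v2 \<in> Ncomb M"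
  shows "(\<lambda>i. v1 i + v2 i) \<in> Ncomb M"
proof -
  obtain S1 c1 where 1: "finite S1" "S1 \<subseteq> M" "v1 = (\<lambda>i. \<Sum>m\<in>S1. c1 m * m i)" using assms(1) by (auto simp: Ncomb_def)
  obtain S2 c2 where 2: "finite S2" "S2 \<subseteq> M" "v2 = (\<lambda>i. \<Sum>m\<in>S2. c2 m * m i)" using assms(2) by (auto simp: Ncomb_def)
  define c where "c m = (if m \<in> S1 then c1 m else 0) + (if m \<in> S2 then c2 m else 0)" for m
  have "(\<lambda>i. v1 i + v2 i) = (\<lambda>i. \<Sum>m\<in>S1 \<union> S2. c m * m i)"
  proof
    fix i
    have a: "(\<Sum>m\<in>S1. c1 m * m i) = (\<Sum>m\<in>S1 \<union> S2. (if m \<in> S1 then c1 m else 0) * m i)"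
      using 1(1) 2(1) by (intro sum.mono_neutral_cong_left) auto
    have b: "(\<Sum>m\<in>S2. c2 m * m i) = (\<Sum>m\<in>S1 \<union> S2. (if m \<in> S2 then c2 m else 0) * m i)"
      using 1(1) 2(1) by (intro sum.mono_neutral_cong_left) auto
    show "v1 i + v2 i = (\<Sum>m\<in>S1 \<union> S2. c m * m i)"
      unfolding 1(3) 2(3) a b c_def by (simp add: sum.distrib distrib_right)
  qed
  then show ?thesis unfolding Ncomb_def using 1 2 by blast
qed

lemma Ncomb_sum:
  assumes "finite D" "\<forall>d\<in>D. g d \<in> Ncomb M"
  shows "(\<lambda>i. \<Sum>d\<in>D. g d i) \<in> Ncomb M"
  using assms
proof (induction D rule: finite_induct)
  case empty then show ?case using Ncomb_zero by simp
next
  case (insert x F)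
  then show ?case using Ncomb_add[of "g x" M "\<lambda>i. \<Sum>d\<in>F. g d i"] by simp
qed

lemma Ncomb_sum_list:
  assumes "\<forall>q\<in>set Qs. g q \<in> Ncomb M"
  shows "(\<lambda>i. sum_list (map (\<lambda>q. g q i) Qs)) \<in> Ncomb M"
  using assms
proof (induction Qs)
  case Nil then show ?case using Ncomb_zero by simp
next
  case (Cons a Qs)
  then show ?case using Ncomb_add[of "g a" M "\<lambda>i. sum_list (map (\<lambda>q. g q i) Qs)"] by simp
qed

definition mlift :: "'v set \<Rightarrow> ('v \<Rightarrow> nat) \<Rightarrow> 'v multiset" where
  "mlift S coef = (\<Sum>m\<in>S. replicate_mset (coef m) m)"

lemma mlift_sum: "finite S \<Longrightarrow> sum_mset (image_mset f (mlift S coef)) = (\<Sum>m\<in>S. coef m * (f m :: nat))"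
  unfolding mlift_def by (induct S rule: finite_induct) auto

lemma mlift_set: "finite S \<Longrightarrow> set_mset (mlift S coef) \<subseteq> S"
  unfolding mlift_def by (induct S rule: finite_induct) auto

lemma card_Suc_split: "card {d \<in> {1..Suc r}. HA d = c} = card {d \<in> {1..r}. HA d = c} + (if HA (Suc r) = c then 1 else 0)"
proof -
  have "{d \<in> {1..Suc r}. HA d = c} = {d \<in> {1..r}. HA d = c} \<union> (if HA (Suc r) = c then {Suc r} else {})"
    by (auto simp: le_Suc_eq)
  then show ?thesis by (simp add: card_Un_disjoint)
qed

lemma assign:
  fixes r :: nat and V :: "'a set"
  assumes fin: "finite V"
  shows "set_mset M \<subseteq> PM V \<Longrightarrow> \<forall>d\<in>{1..r}. HA d \<in> Cset V \<Longrightarrow>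
    \<forall>c\<in>Cset V. sum_mset (image_mset (\<lambda>m. m (Inr c)) M) = card {d\<in>{1..r}. HA d = c} \<Longrightarrow>
    \<exists>q. (\<forall>d\<in>{1..r}. perfect_matching_B V (HA d) (q d)) \<and>
        (\<forall>e\<in>Kset V. (\<Sum>d=1..r. if e \<in> q d then 1 else 0) = sum_mset (image_mset (\<lambda>m. m (Inl e)) M))"
proof (induction r arbitrary: M)
  case 0
  have "M = {#}"
  proof (rule ccontr)
    assume "M \<noteq> {#}"
    then obtain m where m: "m \<in># M" by auto
    then obtain q c where qc: "m = chi_EC V q c" "c \<in> Cset V" using PM_D 0(1) by blast
    obtain M' where MM: "M = add_mset m M'" using mset_add[OF m] by blast
    have "m (Inr c) \<le> sum_mset (image_mset (\<lambda>m. m (Inr c)) M)"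
      unfolding MM by simp
    moreover have "m (Inr c) = 1" using qc by (simp add: chi_Inr)
    ultimately show False using 0(3) qc(2) by fastforce
  qed
  then show ?case by auto
next
  case (Suc r)
  define c where "c = HA (Suc r)"
  have cC: "c \<in> Cset V" using Suc.prems(2) by (auto simp: c_def)
  have "card {d\<in>{1..Suc r}. HA d = c} \<ge> 1" unfolding card_Suc_split by (simp add: c_def)
  moreover have "sum_mset (image_mset (\<lambda>m. m (Inr c)) M) = card {d\<in>{1..Suc r}. HA d = c}"
    using Suc.prems(3) cC by blast
  ultimately have "sum_mset (image_mset (\<lambda>m. m (Inr c)) M) \<noteq> 0" by linarith
  then obtain m where m: "m \<in># M" "m (Inr c) \<noteq> 0" by (auto simp: sum_mset_0_iff)
  then obtain q0 c0 where qc: "m = chi_EC V q0 c0" "c0 \<in> Cset V" "perfect_matching_B V c0 q0"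
    using PM_D Suc.prems(1) by blast
  have c0: "c0 = c" using m(2) qc cC by (simp add: chi_Inr split: if_splits)
  define M' where "M' = M - {#m#}"
  have MM: "M = add_mset m M'" using m(1) by (simp add: M'_def)
  have "\<exists>q. (\<forall>d\<in>{1..r}. perfect_matching_B V (HA d) (q d)) \<and>
        (\<forall>e\<in>Kset V. (\<Sum>d=1..r. if e \<in> q d then 1 else 0) = sum_mset (image_mset (\<lambda>m. m (Inl e)) M'))"
  proof (rule Suc.IH)
    show "set_mset M' \<subseteq> PM V" using Suc.prems(1) MM by auto
    show "\<forall>d\<in>{1..r}. HA d \<in> Cset V" using Suc.prems(2) by auto
    show "\<forall>c'\<in>Cset V. sum_mset (image_mset (\<lambda>m. m (Inr c')) M') = card {d\<in>{1..r}. HA d = c'}"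
    proof
      fix c' assume c': "c' \<in> Cset V"
      have "sum_mset (image_mset (\<lambda>m. m (Inr c')) M) = m (Inr c') + sum_mset (image_mset (\<lambda>m. m (Inr c')) M')"
        using MM by simp
      moreover have "m (Inr c') = (if HA (Suc r) = c' then 1 else 0)"
        using qc c0 c' by (auto simp: chi_Inr c_def)
      ultimately show "sum_mset (image_mset (\<lambda>m. m (Inr c')) M') = card {d\<in>{1..r}. HA d = c'}"
        using Suc.prems(3) c' card_Suc_split[of r HA c'] by simp
    qed
  qed
  then obtain q where q: "\<forall>d\<in>{1..r}. perfect_matching_B V (HA d) (q d)"
    "\<forall>e\<in>Kset V. (\<Sum>d=1..r. if e \<in> q d then 1 else 0) = sum_mset (image_mset (\<lambda>m. m (Inl e)) M')" by blast
  show ?case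
  proof (rule exI[of _ "q(Suc r := q0)"], intro conjI ballI)
    fix d assume d: "d \<in> {1..Suc r}"
    show "perfect_matching_B V (HA d) ((q(Suc r := q0)) d)"
    proof (cases "d = Suc r")
      case True then show ?thesis using qc(3) c0 by (simp add: c_def)
    next
      case False then show ?thesis using q(1) d by auto
    qed
  next
    fix e assume e: "e \<in> Kset V"
    have "(\<Sum>d=1..Suc r. if e \<in> (q(Suc r := q0)) d then 1 else 0) =
          (\<Sum>d=1..r. if e \<in> q d then 1 else 0) + (if e \<in> q0 then 1 else 0)"
      by (simp add: sum.cl_ivl_Suc)
    also have "\<dots> = sum_mset (image_mset (\<lambda>m. m (Inl e)) M') + m (Inl e)"
      using q(2) e qc(1) by (simp add: chi_Inl)
    also have "\<dots> = sum_mset (image_mset (\<lambda>m. m (Inl e)) M)" using MM by simp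
    finally show "(\<Sum>d=1..Suc r. if e \<in> (q(Suc r := q0)) d then 1 else 0) = sum_mset (image_mset (\<lambda>m. m (Inl e)) M)" .
  qed
qed

lemma mk_HA:
  assumes "finite C"
  shows "(\<Sum>c\<in>C. f c) = (r::nat) \<Longrightarrow> \<exists>HA. (\<forall>d\<in>{1..r}. HA d \<in> C) \<and> (\<forall>c\<in>C. card {d\<in>{1..r}. HA d = c} = f c)"
  using assms
proof (induction C arbitrary: r rule: finite_induct)
  case empty
  then show ?case by auto
next
  case (insert c0 C)
  define r' where "r' = (\<Sum>c\<in>C. f c)"
  have r: "r = f c0 + r'" using insert by (simp add: r'_def)
  obtain HA' where HA': "\<forall>d\<in>{1..r'}. HA' d \<in> C" "\<forall>c\<in>C. card {d\<in>{1..r'}. HA' d = c} = f c"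
    using insert.IH[of r'] by (auto simp: r'_def)
  define HA where "HA d = (if d \<le> r' then HA' d else c0)" for d
  show ?case
  proof (intro exI[of _ HA] conjI ballI)
    fix d assume "d \<in> {1..r}" then show "HA d \<in> insert c0 C" using HA'(1) by (auto simp: HA_def)
  next
    fix c assume c: "c \<in> insert c0 C"
    show "card {d\<in>{1..r}. HA d = c} = f c"
    proof (cases "c = c0")
      case True
      have "{d\<in>{1..r}. HA d = c} = {r'+1..r}"
      proof (intro equalityI subsetI)
        fix d assume "d \<in> {d\<in>{1..r}. HA d = c}"
        then have "d \<in> {1..r}" "HA d = c0" using True by auto
        moreover have "d \<le> r' \<Longrightarrow> HA d \<noteq> c0" using HA'(1) insert.hyps(2) \<open>d \<in> {1..r}\<close> by (auto simp: HA_def)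
        ultimately show "d \<in> {r'+1..r}" by force
      next
        fix d assume "d \<in> {r'+1..r}"
        then show "d \<in> {d\<in>{1..r}. HA d = c}" using True by (auto simp: HA_def)
      qed
      then show ?thesis using r True by simp
    next
      case False
      then have cC: "c \<in> C" using c by auto
      have "{d\<in>{1..r}. HA d = c} = {d\<in>{1..r'}. HA' d = c}"
        using False r by (auto simp: HA_def)
      then show ?thesis using HA'(2) cC by simp
    qed
  qed
qed


lemma Kset_pair: "a \<in> V \<Longrightarrow> b \<in> V \<Longrightarrow> a \<noteq> b \<Longrightarrow> {a, b} \<in> Kset V"
  by (auto simp: Kset_def)

lemma Kset_D: "e \<in> Kset V \<Longrightarrow> v \<in> e \<Longrightarrow> \<exists>b. e = {v, b} \<and> b \<in> V \<and> b \<noteq> v \<and> v \<in> V"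
  by (auto simp: Kset_def insert_commute)

lemma x_from_q:
  fixes r :: nat and V :: "'a set"
  assumes fin: "finite V" and EK: "E \<subseteq> Kset V"
    and HA: "\<forall>d\<in>{1..r}. HA d \<in> Cset V"
    and pm: "\<forall>d\<in>{1..r}. perfect_matching_B V (HA d) (q d)"
    and cnt: "\<forall>e\<in>Kset V. (\<Sum>d=1..r. if e \<in> q d then 1 else 0) = (if e \<in> E then 1 else (0::nat))"
  defines "x \<equiv> (\<lambda>e d. if e \<in> Kset V \<and> d \<in> {1..r} then (if e \<in> q d then 1 else 0) else (0::real))"
  shows "x \<in> PGHA V E r HA \<and> integral_point x"
proof -
  have cntr: "(\<Sum>d=1..r. x e d) = (if e \<in> E then 1 else 0)" if e: "e \<in> Kset V" for e
  proof -
    have "(\<Sum>d=1..r. x e d) = (\<Sum>d=1..r. real (if e \<in> q d then 1 else 0))"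
      using e by (intro sum.cong) (auto simp: x_def)
    also have "\<dots> = real (\<Sum>d=1..r. if e \<in> q d then 1 else 0)" by (simp only: of_nat_sum)
    also have "\<dots> = (if e \<in> E then 1 else 0)" using cnt e by simp
    finally show ?thesis .
  qed
  have "x \<in> PGHA V E r HA"
    unfolding PGHA_def mem_Collect_eq
  proof (intro conjI allI ballI impI)
    fix e d assume "\<not> (e \<in> Kset V \<and> d \<in> {1..r})" then show "x e d = 0" by (auto simp: x_def)
  next
    fix e assume "e \<in> E" then show "(\<Sum>d=1..r. x e d) = 1" using cntr EK by auto
  next
    fix e d assume e: "e \<in> Kset V - E" and d: "d \<in> {1..r}"
    have "(\<Sum>d=1..r. if e \<in> q d then 1 else 0) = (0::nat)" using cnt e by auto
    then have "e \<notin> q d" using d by (auto simp: sum_eq_0_iff split: if_splits)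
    then show "x e d = 0" by (simp add: x_def)
  next
    fix d a assume d: "d \<in> {1..r}" and a: "a \<in> V"
    have "(\<Sum>b\<in>V-{a}. x {a,b} d) = (\<Sum>b\<in>V-{a}. if {a,b} \<in> q d then 1 else 0)"
      using d a by (intro sum.cong) (auto simp: x_def intro: Kset_pair)
    also have "\<dots> = 1" using pm_row[OF fin _ _ a] HA pm d by blast
    finally show "(\<Sum>b\<in>V-{a}. x {a,b} d) = 1" .
  next
    fix e d assume "e \<in> E" "d \<in> {1..r}"
    show "0 \<le> x e d" by (simp add: x_def)
    show "x e d \<le> 1" by (simp add: x_def)
  next
    fix a b d assume h: "{a, b} \<in> E \<and> d \<in> {1..r} \<and> (\<exists>S\<in>HA d. a \<in> S \<and> b \<in> S)"
    have "{a,b} \<notin> q d"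
    proof
      assume "{a,b} \<in> q d"
      then have "{a,b} \<in> Bedges (HA d)" using pm h unfolding perfect_matching_B_def by blast
      then show False using Bedges_D2[of "HA d" V a b] HA h by blast
    qed
    then show "x {a, b} d = 0" by (simp add: x_def)
  qed
  moreover have "integral_point x" unfolding integral_point_def x_def by auto
  ultimately show ?thesis by blast
qed

lemma int01: "(x::real) \<in> \<int> \<Longrightarrow> 0 \<le> x \<Longrightarrow> x \<le> 1 \<Longrightarrow> x = 0 \<or> x = 1"
  by (elim Ints_cases) auto

lemma q_from_x:
  fixes r :: nat and V :: "'a set"
  assumes fin: "finite V" and EK: "E \<subseteq> Kset V"
    and HA: "\<forall>d\<in>{1..r}. HA d \<in> Cset V"
    and x: "x \<in> PGHA V E r HA" and xi: "integral_point x"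
  defines "q \<equiv> (\<lambda>d. {e\<in>E. x e d = 1})"
  shows "(\<forall>d\<in>{1..r}. perfect_matching_B V (HA d) (q d)) \<and>
         (\<forall>e\<in>Kset V. (\<Sum>d=1..r. if e \<in> q d then 1 else 0) = (if e \<in> E then 1 else (0::nat)))"
proof -
  have PP: "(\<forall>e d. \<not> (e \<in> Kset V \<and> d \<in> {1..r}) \<longrightarrow> x e d = 0) \<and>
     (\<forall>e \<in> E. (\<Sum>d = 1..r. x e d) = 1) \<and>
     (\<forall>e \<in> Kset V - E. \<forall>d \<in> {1..r}. x e d = 0) \<and>
     (\<forall>d \<in> {1..r}. \<forall>a \<in> V. (\<Sum>b \<in> V - {a}. x {a, b} d) = 1) \<and>
     (\<forall>e \<in> E. \<forall>d \<in> {1..r}. 0 \<le> x e d \<and> x e d \<le> 1) \<and>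
     (\<forall>a b d. {a, b} \<in> E \<and> d \<in> {1..r} \<and> (\<exists>S \<in> HA d. a \<in> S \<and> b \<in> S) \<longrightarrow> x {a, b} d = 0)"
    using x unfolding PGHA_def mem_Collect_eq .
  note P1 = conjunct1[OF PP]
  note P2 = conjunct1[OF conjunct2[OF PP]]
  note P3 = conjunct1[OF conjunct2[OF conjunct2[OF PP]]]
  note P4 = conjunct1[OF conjunct2[OF conjunct2[OF conjunct2[OF PP]]]]
  note P5 = conjunct1[OF conjunct2[OF conjunct2[OF conjunct2[OF conjunct2[OF PP]]]]]
  note P6 = conjunct2[OF conjunct2[OF conjunct2[OF conjunct2[OF conjunct2[OF PP]]]]]
  have x01: "x e d = (if e \<in> q d then 1 else 0)" if "e \<in> Kset V" "d \<in> {1..r}" for e d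
  proof (cases "e \<in> E")
    case True
    have "x e d \<in> \<int>" using xi unfolding integral_point_def by blast
    moreover have "0 \<le> x e d \<and> x e d \<le> 1" using P5 True that(2) by blast
    ultimately have "x e d = 0 \<or> x e d = 1" using int01 by blast
    then show ?thesis using True by (auto simp: q_def)
  next
    case False then show ?thesis using P3 that by (auto simp: q_def)
  qed
  have pmd: "perfect_matching_B V (HA d) (q d)" if d: "d \<in> {1..r}" for d
    unfolding perfect_matching_B_def
  proof (intro conjI ballI subsetI)
    fix e assume e: "e \<in> q d"
    then have eE: "e \<in> E" "x e d = 1" by (auto simp: q_def)
    then obtain a b where ab: "e = {a,b}" "a \<in> V" "b \<in> V" "a \<noteq> b" using EK by (auto simp: Kset_def)
    have "\<not> (\<exists>S\<in>HA d. a \<in> S \<and> b \<in> S)" using P6[rule_format, of a b d] eE ab d by auto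
    then show "e \<in> Bedges (HA d)" using Bedges_I[of "HA d" V a b] HA d ab by auto
  next
    fix v assume v: "v \<in> V"
    have "(\<Sum>b\<in>V-{v}. x {v,b} d) = 1" using P4 v d by blast
    moreover have "(\<Sum>b\<in>V-{v}. x {v,b} d) = (\<Sum>b\<in>V-{v}. if {v,b} \<in> q d then 1 else 0)"
    proof (rule sum.cong[OF refl])
      fix b assume "b \<in> V - {v}"
      then have "{v,b} \<in> Kset V" using v by (auto intro: Kset_pair)
      then show "x {v,b} d = (if {v,b} \<in> q d then 1 else 0)" using x01 d by blast
    qed
    moreover have "(\<Sum>b\<in>V-{v}. if {v,b} \<in> q d then 1 else 0) = (real (card {b\<in>V-{v}. {v,b} \<in> q d}))"
      using fin by (intro sum_ind) simp
    ultimately have "card {b\<in>V-{v}. {v,b} \<in> q d} = 1" by simp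
    then obtain b0 where b0: "{b\<in>V-{v}. {v,b} \<in> q d} = {b0}" by (auto simp: card_Suc_eq)
    show "\<exists>!e. e \<in> q d \<and> v \<in> e"
    proof (rule ex1I[of _ "{v,b0}"])
      show "{v,b0} \<in> q d \<and> v \<in> {v,b0}" using b0 by auto
      fix e assume e: "e \<in> q d \<and> v \<in> e"
      then have "e \<in> Kset V" using EK by (auto simp: q_def)
      from Kset_D[OF this conjunct2[OF e]] obtain b where b: "e = {v,b}" "b \<in> V" "b \<noteq> v" by iprover
      then have "b \<in> {b\<in>V-{v}. {v,b} \<in> q d}" using e by auto
      then have "b \<in> {b0}" unfolding b0 .
      then have "b = b0" by simp
      then show "e = {v,b0}" using b(1) by simp
    qed
  qed
  have "(\<Sum>d=1..r. if e \<in> q d then 1 else 0) = (if e \<in> E then 1 else (0::nat))" if e: "e \<in> Kset V" for e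
  proof (cases "e \<in> E")
    case True
    have "(\<Sum>d=1..r. x e d) = 1" using P2 True by blast
    moreover have "(\<Sum>d=1..r. x e d) = (\<Sum>d=1..r. real (if e \<in> q d then 1 else 0))"
      using e by (intro sum.cong) (auto simp: x01)
    ultimately have h: "(\<Sum>d=1..r. real (if e \<in> q d then 1 else 0)) = 1" by simp
    have "real (\<Sum>d=1..r. if e \<in> q d then 1 else 0) = (\<Sum>d=1..r. real (if e \<in> q d then 1 else 0))"
      by (rule of_nat_sum)
    then have "real (\<Sum>d=1..r. if e \<in> q d then 1 else 0) = 1" using h by simp
    then have "(\<Sum>d=1..r. if e \<in> q d then 1 else 0) = (1::nat)" by linarith
    then show ?thesis using True by simp
  next
    case False
    then show ?thesis by (simp add: q_def)
  qed
  then show ?thesis using pmd by blast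
qed


lemma finite_Cset: "finite V \<Longrightarrow> finite (Cset V)"
proof -
  assume "finite V"
  have "Cset V \<subseteq> Pow (Pow V)" by (auto simp: Cset_def)
  then show ?thesis using \<open>finite V\<close> by (meson finite_Pow_iff finite_subset)
qed

lemma PM_row_nat:
  assumes "finite V" "m \<in> PM V" "a \<in> V"
  shows "(\<Sum>b\<in>V-{a}. m (Inl {a,b})) = 1"
proof -
  obtain q c where qc: "m = chi_EC V q c" "c \<in> Cset V" "perfect_matching_B V c q" using PM_D[OF assms(2)] by blast
  have "(\<Sum>b\<in>V-{a}. m (Inl {a,b})) = (\<Sum>b\<in>V-{a}. if {a,b} \<in> q then 1 else 0)"
  proof (rule sum.cong[OF refl])
    fix b assume "b \<in> V - {a}"
    then have "{a,b} \<in> Kset V" using assms(3) by (auto intro: Kset_pair)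
    then show "m (Inl {a,b}) = (if {a,b} \<in> q then 1 else 0)" using qc(1) by (simp add: chi_Inl)
  qed
  also have "\<dots> = 1" by (rule pm_row[OF assms(1) qc(2,3) assms(3)])
  finally show ?thesis .
qed

lemma PM_C_sum:
  assumes "finite V" "m \<in> PM V"
  shows "(\<Sum>c\<in>Cset V. m (Inr c)) = 1"
proof -
  obtain q c where qc: "m = chi_EC V q c" "c \<in> Cset V" "perfect_matching_B V c q" using PM_D[OF assms(2)] by blast
  have "(\<Sum>c'\<in>Cset V. m (Inr c')) = (\<Sum>c'\<in>Cset V. if c' = c then 1 else 0)"
    using qc(1) by (intro sum.cong) (auto simp: chi_Inr)
  also have "\<dots> = 1" using qc(2) finite_Cset[OF assms(1)] by simp
  finally show ?thesis .
qed

lemma deg_sum: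
  assumes "finite V" "E \<subseteq> Kset V" "a \<in> V"
  shows "card {e\<in>E. a \<in> e} = card {b\<in>V-{a}. {a,b} \<in> E}"
proof -
  have img: "(\<lambda>b. {a,b}) ` {b\<in>V-{a}. {a,b} \<in> E} = {e\<in>E. a \<in> e}"
  proof (intro equalityI subsetI)
    fix e assume "e \<in> {e\<in>E. a \<in> e}"
    then have e: "e \<in> E" "a \<in> e" by auto
    then have "e \<in> Kset V" using assms(2) by auto
    from Kset_D[OF this e(2)] obtain b where b: "e = {a,b}" "b \<in> V" "b \<noteq> a" by iprover
    then show "e \<in> (\<lambda>b. {a,b}) ` {b\<in>V-{a}. {a,b} \<in> E}" using e by auto
  qed auto
  have "inj_on (\<lambda>b. {a,b}) {b\<in>V-{a}. {a,b} \<in> E}"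
    by (rule inj_onI) (auto simp: doubleton_eq_iff)
  from card_image[OF this] show ?thesis unfolding img .
qed


lemma empty_case:
  assumes "v \<in> Nbar {} (PM {})"
  shows "v \<in> Ncomb (PM ({}::'a set))"
proof -
  define c0 :: "'a set set" where "c0 = {{}}"
  have C: "Cset ({}::'a set) = {c0}" unfolding Cset_def c0_def by auto
  have K: "Kset ({}::'a set) = {}" unfolding Kset_def by auto
  define m0 where "m0 = chi_EC ({}::'a set) {} c0"
  have m0PM: "m0 \<in> PM {}" unfolding PM_def m0_def perfect_matching_B_def using C by auto
  have vz: "\<forall>i. i \<notin> idx {} \<longrightarrow> v i = 0" using assms by (auto simp: Nbar_def)
  have veq: "v = (\<lambda>i. \<Sum>m\<in>{m0}. v (Inr c0) * m i)"
  proof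
    fix i show "v i = (\<Sum>m\<in>{m0}. v (Inr c0) * m i)"
    proof (cases i)
      case (Inl e) then show ?thesis using vz K by (auto simp: m0_def chi_EC_def idx_def)
    next
      case (Inr c) then show ?thesis using vz C by (auto simp: m0_def chi_EC_def idx_def)
    qed
  qed
  show ?thesis unfolding Ncomb_def
    by (rule CollectI, rule exI[of _ "{m0}"], rule exI[of _ "\<lambda>_. v (Inr c0)"], intro conjI)
       (simp, use m0PM in simp, rule veq)
qed

lemma dir2:
  fixes V :: "'a set" and E :: "'a set set" and r :: nat
  assumes fin: "finite V" and reg: "regular_graph V E r"
    and RHS: "\<forall>HA. HAP_table V r HA \<longrightarrow> PGHA V E r HA \<noteq> {} \<longrightarrow> (\<exists>x \<in> PGHA V E r HA. integral_point x)"
  shows "B_factorizable V E"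
  unfolding B_factorizable_def
proof (intro ballI impI)
  fix v assume vN: "v \<in> Nbar V (PM V)" and hv: "\<forall>e\<in>Kset V. v (Inl e) = (if e \<in> E then 1 else 0)"
  have EK: "E \<subseteq> Kset V" and deg: "\<forall>a\<in>V. card {e \<in> E. a \<in> e} = r" using reg by (auto simp: regular_graph_def)
  have vz: "\<forall>i. i \<notin> idx V \<longrightarrow> v i = 0" using vN by (auto simp: Nbar_def)
  obtain k :: nat where k: "k \<ge> 1" "(\<lambda>i. k * v i) \<in> Ncomb (PM V)" using vN by (auto simp: Nbar_def)
  then obtain S coef where S: "finite S" "S \<subseteq> PM V" "(\<lambda>i. k * v i) = (\<lambda>i. \<Sum>m\<in>S. coef m * m i)"
    unfolding Ncomb_def by blast
  have kv: "k * v i = (\<Sum>m\<in>S. coef m * m i)" for i using fun_cong[OF S(3), of i] by simp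
  have finC: "finite (Cset V)" using finite_Cset[OF fin] .
  show "v \<in> Ncomb (PM V)"
  proof (cases "V = {}")
    case True
    then show ?thesis using empty_case vN by blast
  next
    case False
    then obtain a0 where a0: "a0 \<in> V" by blast
    have sumC: "(\<Sum>c\<in>Cset V. v (Inr c)) = r"
    proof -
      have "(\<Sum>b\<in>V-{a0}. v (Inl {a0,b})) = (\<Sum>b\<in>V-{a0}. if {a0,b} \<in> E then 1 else 0)"
      proof (rule sum.cong[OF refl])
        fix b assume "b \<in> V - {a0}"
        then have "{a0,b} \<in> Kset V" using a0 by (auto intro: Kset_pair)
        then show "v (Inl {a0,b}) = (if {a0,b} \<in> E then 1 else 0)" using hv by blast
      qed
      also have "\<dots> = card {b\<in>V-{a0}. {a0,b} \<in> E}" using fin sum_ind[where 'n=nat, of "V-{a0}" "\<lambda>b. {a0,b} \<in> E"] by simp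
      also have "\<dots> = r" using deg_sum[OF fin EK a0] deg a0 by simp
      finally have r1: "(\<Sum>b\<in>V-{a0}. v (Inl {a0,b})) = r" .
      have "k * r = (\<Sum>b\<in>V-{a0}. k * v (Inl {a0,b}))" unfolding r1[symmetric] by (rule sum_distrib_left)
      also have "\<dots> = (\<Sum>b\<in>V-{a0}. \<Sum>m\<in>S. coef m * m (Inl {a0,b}))" using kv by simp
      also have "\<dots> = (\<Sum>m\<in>S. coef m * (\<Sum>b\<in>V-{a0}. m (Inl {a0,b})))"
        by (simp add: sum.swap[of _ _ S] sum_distrib_left)
      also have "\<dots> = (\<Sum>m\<in>S. coef m)" using PM_row_nat[OF fin _ a0] S(2) by (intro sum.cong) auto
      also have "\<dots> = (\<Sum>m\<in>S. coef m * (\<Sum>c\<in>Cset V. m (Inr c)))" using PM_C_sum[OF fin] S(2) by (intro sum.cong) auto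
      also have "\<dots> = (\<Sum>c\<in>Cset V. \<Sum>m\<in>S. coef m * m (Inr c))"
        by (simp add: sum.swap[of _ S] sum_distrib_left)
      also have "\<dots> = (\<Sum>c\<in>Cset V. k * v (Inr c))" using kv by simp
      also have "\<dots> = k * (\<Sum>c\<in>Cset V. v (Inr c))" by (simp add: sum_distrib_left)
      finally show ?thesis using k(1) by simp
    qed
    obtain HA where HA: "\<forall>d\<in>{1..r}. HA d \<in> Cset V" "\<forall>c\<in>Cset V. card {d\<in>{1..r}. HA d = c} = v (Inr c)"
      using mk_HA[OF finC sumC] by blast
    have tab: "HAP_table V r HA" using HA(1) by (simp add: HAP_table_def)
    have vpos: "v (Inr (HA d)) \<ge> 1" if d: "d \<in> {1..r}" for d
    proof -
      have "d \<in> {d'\<in>{1..r}. HA d' = HA d}" using d by simp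
      then have "card {d'\<in>{1..r}. HA d' = HA d} > 0" by (subst card_gt_0_iff) auto
      moreover have "HA d \<in> Cset V" using HA(1) d by blast
      ultimately show ?thesis using HA(2) by simp
    qed
    define num where "num e d = (\<Sum>m\<in>S. coef m * m (Inr (HA d)) * m (Inl e))" for e d
    define x where "x e d = (if e \<in> Kset V \<and> d \<in> {1..r} then real (num e d) / real (k * v (Inr (HA d))) else 0)" for e d
    have le1: "m i \<le> 1" if "m \<in> S" for m i using that S(2) PM_D chi_le1 by blast
    have numle: "num e d \<le> k * v (Inr (HA d))" for e d
    proof -
      have "num e d \<le> (\<Sum>m\<in>S. coef m * m (Inr (HA d)))"
        unfolding num_def
      proof (rule sum_mono)
        fix m assume "m \<in> S"
        then have "m (Inl e) \<le> 1" by (rule le1)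
        then show "coef m * m (Inr (HA d)) * m (Inl e) \<le> coef m * m (Inr (HA d))"
          using mult_left_mono[of "m (Inl e)" 1 "coef m * m (Inr (HA d))"] by simp
      qed
      then show ?thesis using kv by simp
    qed
    have numKE: "num e d = 0" if e: "e \<in> Kset V - E" for e d
    proof -
      have "num e d \<le> (\<Sum>m\<in>S. coef m * m (Inl e))"
        unfolding num_def
      proof (rule sum_mono)
        fix m assume "m \<in> S"
        then have "m (Inr (HA d)) \<le> 1" by (rule le1)
        then show "coef m * m (Inr (HA d)) * m (Inl e) \<le> coef m * m (Inl e)"
          using mult_left_mono[of "m (Inr (HA d))" 1 "coef m * m (Inl e)"] by (simp add: ac_simps)
      qed
      also have "\<dots> = k * v (Inl e)" using kv by simp
      also have "\<dots> = 0" using hv e by simp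
      finally show ?thesis by simp
    qed
    have num6: "num {a,b} d = 0" if h: "{a,b} \<in> E" "d \<in> {1..r}" "S' \<in> HA d" "a \<in> S'" "b \<in> S'" for a b d S'
      unfolding num_def
    proof (rule sum.neutral, rule ballI)
      fix m assume m: "m \<in> S"
      obtain q c0 where qc: "m = chi_EC V q c0" "c0 \<in> Cset V" "perfect_matching_B V c0 q"
        using PM_D m S(2) by blast
      have HAd: "HA d \<in> Cset V" using HA h by blast
      show "coef m * m (Inr (HA d)) * m (Inl {a,b}) = 0"
      proof (cases "HA d = c0")
        case True
        have "{a,b} \<notin> q"
        proof
          assume "{a,b} \<in> q"
          then have "{a,b} \<in> Bedges c0" using qc(3) unfolding perfect_matching_B_def by blast
          then show False using Bedges_D2[OF qc(2)] h True by blast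
        qed
        moreover have "{a,b} \<in> Kset V" using h EK by auto
        ultimately show ?thesis using qc(1) by (simp add: chi_Inl)
      next
        case False then show ?thesis using qc(1) HAd by (simp add: chi_Inr)
      qed
    qed
    have rowsum: "(\<Sum>b\<in>V-{a}. num {a,b} d) = k * v (Inr (HA d))" if a: "a \<in> V" for a d
    proof -
      have "(\<Sum>b\<in>V-{a}. num {a,b} d) = (\<Sum>m\<in>S. coef m * m (Inr (HA d)) * (\<Sum>b\<in>V-{a}. m (Inl {a,b})))"
        unfolding num_def by (simp add: sum.swap[of _ _ S] sum_distrib_left)
      also have "\<dots> = (\<Sum>m\<in>S. coef m * m (Inr (HA d)))"
        using PM_row_nat[OF fin _ a] S(2) by (intro sum.cong) auto
      also have "\<dots> = k * v (Inr (HA d))" using kv by simp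
      finally show ?thesis .
    qed
    have den: "real (k * v (Inr (HA d))) > 0" if "d \<in> {1..r}" for d
      using k(1) vpos[OF that] by simp
    have T: "real (coef m) * (\<Sum>d=1..r. real (m (Inr (HA d))) / real (k * v (Inr (HA d)))) = real (coef m) / real k"
      if m: "m \<in> S" for m
    proof (cases "coef m = 0")
      case True then show ?thesis by simp
    next
      case False
      obtain q c0 where qc: "m = chi_EC V q c0" "c0 \<in> Cset V" "perfect_matching_B V c0 q"
        using PM_D m S(2) by blast
      have "coef m * m (Inr c0) \<le> (\<Sum>m'\<in>S. coef m' * m' (Inr c0))"
        using m S(1) by (intro member_le_sum) auto
      moreover have "m (Inr c0) = 1" using qc by (simp add: chi_Inr)
      ultimately have "coef m \<le> k * v (Inr c0)" using kv by simp
      then have vc0: "v (Inr c0) \<noteq> 0" using False by (metis mult_0_right le_zero_eq)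
      have "(\<Sum>d=1..r. real (m (Inr (HA d))) / real (k * v (Inr (HA d)))) =
            (\<Sum>d=1..r. (if HA d = c0 then 1 else 0) * (1 / real (k * v (Inr c0))))"
        using qc(1) HA(1) by (intro sum.cong) (auto simp: chi_Inr)
      also have "\<dots> = real (card {d\<in>{1..r}. HA d = c0}) * (1 / real (k * v (Inr c0)))"
        by (simp only: sum_distrib_right[symmetric] sum_ind[OF finite_atLeastAtMost])
      also have "\<dots> = real (v (Inr c0)) / real (k * v (Inr c0))" using HA(2) qc(2) by simp
      also have "\<dots> = 1 / real k" using vc0 by simp
      finally show ?thesis by simp
    qed
    have colsum: "(\<Sum>d=1..r. x e d) = 1" if e: "e \<in> E" for e
    proof -
      have eK: "e \<in> Kset V" using e EK by auto
      have "(\<Sum>d=1..r. x e d) = (\<Sum>d=1..r. \<Sum>m\<in>S. real (coef m) * real (m (Inl e)) * (real (m (Inr (HA d))) / real (k * v (Inr (HA d)))))"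
        unfolding x_def num_def using eK
        by (intro sum.cong) (simp_all add: sum_divide_distrib algebra_simps)
      also have "\<dots> = (\<Sum>m\<in>S. real (m (Inl e)) * (real (coef m) * (\<Sum>d=1..r. real (m (Inr (HA d))) / real (k * v (Inr (HA d))))))"
        by (simp add: sum.swap[of _ _ S] sum_distrib_left algebra_simps)
      also have "\<dots> = (\<Sum>m\<in>S. real (m (Inl e)) * (real (coef m) / real k))"
        using T by simp
      also have "\<dots> = real (\<Sum>m\<in>S. coef m * m (Inl e)) / real k"
        by (simp add: sum_divide_distrib algebra_simps)
      also have "\<dots> = real (k * v (Inl e)) / real k" using kv by simp
      also have "\<dots> = 1" using hv eK e k(1) by simp
      finally show ?thesis .
    qed
    have xP: "x \<in> PGHA V E r HA"
      unfolding PGHA_def mem_Collect_eq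
    proof (intro conjI allI ballI impI)
      fix e d assume "\<not> (e \<in> Kset V \<and> d \<in> {1..r})" then show "x e d = 0" by (auto simp: x_def)
    next
      fix e assume "e \<in> E" then show "(\<Sum>d=1..r. x e d) = 1" by (rule colsum)
    next
      fix e d assume "e \<in> Kset V - E" "d \<in> {1..r}" then show "x e d = 0" using numKE by (simp add: x_def)
    next
      fix d a assume d: "d \<in> {1..r}" and a: "a \<in> V"
      have "(\<Sum>b\<in>V-{a}. x {a,b} d) = (\<Sum>b\<in>V-{a}. real (num {a,b} d) / real (k * v (Inr (HA d))))"
      proof (rule sum.cong[OF refl])
        fix b assume "b \<in> V - {a}"
        then have "{a,b} \<in> Kset V" using a by (auto intro: Kset_pair)
        then show "x {a,b} d = real (num {a,b} d) / real (k * v (Inr (HA d)))" using d by (simp add: x_def)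
      qed
      also have "\<dots> = real (\<Sum>b\<in>V-{a}. num {a,b} d) / real (k * v (Inr (HA d)))"
        by (simp add: sum_divide_distrib)
      also have "\<dots> = 1"
      proof -
        have "real (k * v (Inr (HA d))) \<noteq> 0" using den[OF d] by linarith
        then show ?thesis unfolding rowsum[OF a] by (rule divide_self)
      qed
      finally show "(\<Sum>b\<in>V-{a}. x {a,b} d) = 1" .
    next
      fix e d assume "e \<in> E" "d \<in> {1..r}"
      show "0 \<le> x e d" by (simp add: x_def)
      have "real (num e d) \<le> real (k * v (Inr (HA d)))" using numle[of e d] by (simp only: of_nat_le_iff)
      then show "x e d \<le> 1" using den[OF \<open>d \<in> {1..r}\<close>]
        unfolding x_def by (simp add: divide_le_eq_1_pos del: of_nat_mult)
    next
      fix a b d assume h: "{a, b} \<in> E \<and> d \<in> {1..r} \<and> (\<exists>S\<in>HA d. a \<in> S \<and> b \<in> S)"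
      then show "x {a, b} d = 0" using num6 by (auto simp: x_def)
    qed
    obtain x' where x': "x' \<in> PGHA V E r HA" "integral_point x'" using RHS tab xP by blast
    define q where "q = (\<lambda>d. {e\<in>E. x' e d = 1})"
    have qq: "(\<forall>d\<in>{1..r}. perfect_matching_B V (HA d) (q d)) \<and>
         (\<forall>e\<in>Kset V. (\<Sum>d=1..r. if e \<in> q d then 1 else 0) = (if e \<in> E then 1 else (0::nat)))"
      unfolding q_def by (rule q_from_x[OF fin EK HA(1) x'])
    have veq: "v = (\<lambda>i. \<Sum>d\<in>{1..r}. chi_EC V (q d) (HA d) i)"
    proof
      fix i show "v i = (\<Sum>d\<in>{1..r}. chi_EC V (q d) (HA d) i)"
      proof (cases i)
        case (Inl e)
        show ?thesis
        proof (cases "e \<in> Kset V")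
          case True
          have "(\<Sum>d\<in>{1..r}. chi_EC V (q d) (HA d) i) = (\<Sum>d=1..r. if e \<in> q d then 1 else 0)"
            using True Inl by (simp add: chi_Inl)
          then show ?thesis using qq True hv Inl by simp
        next
          case False
          then show ?thesis using vz Inl by (auto simp: chi_EC_def idx_def)
        qed
      next
        case (Inr c)
        show ?thesis
        proof (cases "c \<in> Cset V")
          case True
          have "(\<Sum>d\<in>{1..r}. chi_EC V (q d) (HA d) i) = (\<Sum>d\<in>{1..r}. if HA d = c then 1 else 0)"
            using True Inr by (intro sum.cong) (auto simp: chi_Inr)
          also have "\<dots> = card {d\<in>{1..r}. HA d = c}" using sum_ind[where 'n=nat, of "{1..r}" "\<lambda>d. HA d = c"] by simp
          finally show ?thesis using HA(2) True Inr by simp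
        next
          case False
          then show ?thesis using vz Inr by (auto simp: chi_EC_def idx_def)
        qed
      qed
    qed
    have "(\<lambda>i. \<Sum>d\<in>{1..r}. chi_EC V (q d) (HA d) i) \<in> Ncomb (PM V)"
    proof (rule Ncomb_sum)
      show "\<forall>d\<in>{1..r}. chi_EC V (q d) (HA d) \<in> Ncomb (PM V)"
        using qq HA(1) by (auto intro!: Ncomb_elem simp: PM_def)
    qed simp
    then show ?thesis using veq by simp
  qed
qed


definition ind :: "'v set \<Rightarrow> 'v \<Rightarrow> real" where "ind T = (\<lambda>p. if p \<in> T then 1 else 0)"

definition eqc :: "('v \<Rightarrow> real) \<Rightarrow> real \<Rightarrow> (('v \<Rightarrow> real) \<times> real) set" where
  "eqc a b = {(a, b), (\<lambda>p. - a p, - b)}"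

lemma lin_ind:
  assumes "finite I" "\<forall>p. p \<notin> I \<longrightarrow> X p = 0" "finite T"
  shows "lin I (ind T) X = sum X T"
proof -
  have "lin I (ind T) X = (\<Sum>p\<in>I. if p \<in> T then X p else 0)"
    unfolding lin_def ind_def by (intro sum.cong) auto
  also have "\<dots> = sum X (I \<inter> T)" using assms(1) by (simp add: sum.If_cases Int_def)
  also have "\<dots> = sum X T" using assms by (intro sum.mono_neutral_left) auto
  finally show ?thesis .
qed

lemma lin_neg: "lin I (\<lambda>p. - a p) X = - lin I a X"
  unfolding lin_def by (simp add: sum_negf)

lemma sat_eqc: "(\<forall>c\<in>eqc a b. lin I (fst c) X \<le> snd c) \<longleftrightarrow> lin I a X = b"
  unfolding eqc_def by (auto simp: lin_neg)

definition CSet :: "'a set \<Rightarrow> 'a set set \<Rightarrow> nat \<Rightarrow> (nat \<Rightarrow> 'a set set) \<Rightarrow> ((('a set \<times> nat) \<Rightarrow> real) \<times> real) set" where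
  "CSet V E r HA =
     (\<Union>e\<in>E. eqc (ind ((\<lambda>d. (e, d)) ` {1..r})) 1)
   \<union> (\<Union>p\<in>(Kset V - E) \<times> {1..r}. eqc (ind {p}) 0)
   \<union> (\<Union>p\<in>{1..r} \<times> V. eqc (ind ((\<lambda>b. ({snd p, b}, fst p)) ` (V - {snd p}))) 1)
   \<union> (\<Union>p\<in>E \<times> {1..r}. {(\<lambda>q. - ind {p} q, 0), (ind {p}, 1)})
   \<union> (\<Union>p\<in>{p \<in> E \<times> {1..r}. \<exists>a b. fst p = {a, b} \<and> (\<exists>S\<in>HA (snd p). a \<in> S \<and> b \<in> S)}. eqc (ind {p}) 0)"

lemma finite_Kset: "finite V \<Longrightarrow> finite (Kset V)"
proof -
  assume "finite V"
  have "Kset V \<subseteq> Pow V" by (auto simp: Kset_def)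
  then show ?thesis using \<open>finite V\<close> by (meson finite_Pow_iff finite_subset)
qed

lemma CSet_iff:
  fixes V :: "'a set" and r :: nat
  assumes fin: "finite V" and EK: "E \<subseteq> Kset V"
    and z: "\<forall>e d. \<not> (e \<in> Kset V \<and> d \<in> {1..r}) \<longrightarrow> x e d = 0"
  defines "I \<equiv> Kset V \<times> {1..r}"
  defines "X \<equiv> (\<lambda>p. x (fst p) (snd p))"
  shows "x \<in> PGHA V E r HA \<longleftrightarrow> (\<forall>c\<in>CSet V E r HA. lin I (fst c) X \<le> snd c)"
proof -
  have finI: "finite I" unfolding I_def using finite_Kset[OF fin] by simp
  have zX: "\<forall>p. p \<notin> I \<longrightarrow> X p = 0" using z unfolding I_def X_def by auto
  have L: "lin I (ind T) X = sum X T" if "finite T" for T using lin_ind[OF finI zX that] .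
  have s1: "sum X ((\<lambda>d. (e, d)) ` {1..r}) = (\<Sum>d=1..r. x e d)" for e
    by (subst sum.reindex) (auto simp: inj_on_def X_def)
  have s3: "sum X ((\<lambda>b. ({a, b}, d)) ` (V - {a})) = (\<Sum>b\<in>V-{a}. x {a,b} d)" for a d
    by (subst sum.reindex) (auto simp: inj_on_def X_def doubleton_eq_iff)
  have A1: "(\<forall>c\<in>(\<Union>e\<in>E. eqc (ind ((\<lambda>d. (e, d)) ` {1..r})) 1). lin I (fst c) X \<le> snd c) \<longleftrightarrow>
        (\<forall>e\<in>E. (\<Sum>d=1..r. x e d) = 1)"
    by (simp only: ball_UN sat_eqc L[OF finite_imageI[OF finite_atLeastAtMost]] s1)
  have A2: "(\<forall>c\<in>(\<Union>p\<in>(Kset V - E) \<times> {1..r}. eqc (ind {p}) 0). lin I (fst c) X \<le> snd c) \<longleftrightarrow>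
        (\<forall>e\<in>Kset V - E. \<forall>d\<in>{1..r}. x e d = 0)"
    by (simp only: ball_UN sat_eqc L[OF finite.insertI[OF finite.emptyI]])
       (simp add: X_def)
  have A3: "(\<forall>c\<in>(\<Union>p\<in>{1..r} \<times> V. eqc (ind ((\<lambda>b. ({snd p, b}, fst p)) ` (V - {snd p}))) 1). lin I (fst c) X \<le> snd c) \<longleftrightarrow>
        (\<forall>d\<in>{1..r}. \<forall>a\<in>V. (\<Sum>b\<in>V-{a}. x {a,b} d) = 1)"
    by (simp only: ball_UN sat_eqc L[OF finite_imageI[OF finite_Diff[OF fin]]] s3) (auto simp: Ball_def)
  have A4: "(\<forall>c\<in>(\<Union>p\<in>E \<times> {1..r}. {(\<lambda>q. - ind {p} q, 0), (ind {p}, 1)}). lin I (fst c) X \<le> snd c) \<longleftrightarrow>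
        (\<forall>e\<in>E. \<forall>d\<in>{1..r}. 0 \<le> x e d \<and> x e d \<le> 1)"
    using L by (auto simp: lin_neg X_def)
  have A5: "(\<forall>c\<in>(\<Union>p\<in>{p \<in> E \<times> {1..r}. \<exists>a b. fst p = {a, b} \<and> (\<exists>S\<in>HA (snd p). a \<in> S \<and> b \<in> S)}. eqc (ind {p}) 0). lin I (fst c) X \<le> snd c) \<longleftrightarrow>
        (\<forall>a b d. {a, b} \<in> E \<and> d \<in> {1..r} \<and> (\<exists>S \<in> HA d. a \<in> S \<and> b \<in> S) \<longrightarrow> x {a, b} d = 0)"
    apply (simp only: ball_UN sat_eqc L[OF finite.insertI[OF finite.emptyI]])
    apply (auto simp: X_def)
    apply (drule spec[of _ "{_, _}"], drule spec, erule mp)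
    apply blast
    done
  show ?thesis
    unfolding PGHA_def mem_Collect_eq CSet_def ball_Un A1 A2 A3 A4 A5 by (simp only: eqTrueI[OF z] conj_assoc simp_thms)
qed

lemma rational_point:
  fixes V :: "'a set" and r :: nat
  assumes fin: "finite V" and EK: "E \<subseteq> Kset V" and x0: "x0 \<in> PGHA V E r HA"
  shows "\<exists>x \<in> PGHA V E r HA. \<forall>e d. x e d \<in> \<rat>"
proof -
  define I where "I = Kset V \<times> {1..r}"
  have finI: "finite I" unfolding I_def using finite_Kset[OF fin] by simp
  have z0: "\<forall>e d. \<not> (e \<in> Kset V \<and> d \<in> {1..r}) \<longrightarrow> x0 e d = 0" using x0 unfolding PGHA_def mem_Collect_eq by (rule conjunct1)
  have finCS: "finite (CSet V E r HA)"
  proof -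
    have "finite E" using EK finite_Kset[OF fin] finite_subset by blast
    moreover have "finite (Kset V - E)" using finite_Kset[OF fin] by simp
    ultimately show ?thesis unfolding CSet_def eqc_def using fin by auto
  qed
  have ratCS: "\<forall>c\<in>CSet V E r HA. (\<forall>i\<in>I. fst c i \<in> \<rat>) \<and> snd c \<in> \<rat>"
    unfolding CSet_def eqc_def ind_def by auto
  have "\<exists>X. \<forall>c\<in>CSet V E r HA. lin I (fst c) X \<le> snd c"
    using CSet_iff[OF fin EK z0] x0 unfolding I_def by blast
  from FM[OF finI finCS ratCS this] obtain Y where Y: "\<forall>i. Y i \<in> \<rat>" "\<forall>c\<in>CSet V E r HA. lin I (fst c) Y \<le> snd c"
    by blast
  define x where "x e d = (if (e, d) \<in> I then Y (e, d) else 0)" for e d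
  have z: "\<forall>e d. \<not> (e \<in> Kset V \<and> d \<in> {1..r}) \<longrightarrow> x e d = 0" by (auto simp: x_def I_def)
  have "lin I a (\<lambda>p. x (fst p) (snd p)) = lin I a Y" for a
    unfolding lin_def by (intro sum.cong) (auto simp: x_def)
  then have "\<forall>c\<in>CSet V E r HA. lin I (fst c) (\<lambda>p. x (fst p) (snd p)) \<le> snd c" using Y(2) by simp
  then have "x \<in> PGHA V E r HA" using CSet_iff[OF fin EK z] unfolding I_def by blast
  moreover have "\<forall>e d. x e d \<in> \<rat>" using Y(1) by (auto simp: x_def)
  ultimately show ?thesis by blast
qed

lemma common_den:
  fixes f :: "'b \<Rightarrow> real"
  assumes "finite A"
  shows "\<forall>a\<in>A. f a \<in> \<rat> \<Longrightarrow> \<exists>N::nat. N \<ge> 1 \<and> (\<forall>a\<in>A. real N * f a \<in> \<int>)"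
  using assms
proof (induction A rule: finite_induct)
  case empty then show ?case by (intro exI[of _ 1]) auto
next
  case (insert a0 A)
  obtain N where N: "N \<ge> 1" "\<forall>a\<in>A. real N * f a \<in> \<int>" using insert by auto
  have "f a0 \<in> \<rat>" using insert.prems by auto
  then obtain p q where pq: "q > 0" "f a0 = of_int p / of_int q" by (rule Rats_cases') blast
  define N' where "N' = N * nat q"
  have rN': "real N' = real N * of_int q" using pq(1) by (simp add: N'_def)
  show ?case
  proof (intro exI[of _ N'] conjI ballI)
    show "N' \<ge> 1" using N(1) pq(1) by (simp add: N'_def)
  next
    fix a assume "a \<in> insert a0 A"
    then consider "a = a0" | "a \<in> A" by auto
    then show "real N' * f a \<in> \<int>"
    proof cases
      case 1
      have "real N' * f a = of_int (int N * p)" using pq 1 rN' by simp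
      then show ?thesis by simp
    next
      case 2
      have e1: "real N' * f a = of_int q * (real N * f a)" using rN' by simp
      have "of_int q * (real N * f a) \<in> \<int>" using N(2) 2 by (rule_tac Ints_mult) auto
      then show ?thesis unfolding e1 .
    qed
  qed
qed


lemma sum_list_const: "sum_list (map (\<lambda>q. c) xs) = length xs * (c::nat)"
  by (induction xs) auto

lemma dir1:
  fixes V :: "'a set" and E :: "'a set set" and r :: nat
  assumes fin: "finite V" and EK: "E \<subseteq> Kset V" and BF: "B_factorizable V E"
    and tab: "HAP_table V r HA" and ne: "PGHA V E r HA \<noteq> {}"
  shows "\<exists>x \<in> PGHA V E r HA. integral_point x"
proof -
  have HA: "\<forall>d\<in>{1..r}. HA d \<in> Cset V" using tab by (simp add: HAP_table_def)
  obtain x0 where "x0 \<in> PGHA V E r HA" using ne by blast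
  from rational_point[OF fin EK this] obtain x1 where x1: "x1 \<in> PGHA V E r HA" "\<forall>e d. x1 e d \<in> \<rat>" by blast
  have PP: "(\<forall>e d. \<not> (e \<in> Kset V \<and> d \<in> {1..r}) \<longrightarrow> x1 e d = 0) \<and>
     (\<forall>e \<in> E. (\<Sum>d = 1..r. x1 e d) = 1) \<and>
     (\<forall>e \<in> Kset V - E. \<forall>d \<in> {1..r}. x1 e d = 0) \<and>
     (\<forall>d \<in> {1..r}. \<forall>a \<in> V. (\<Sum>b \<in> V - {a}. x1 {a, b} d) = 1) \<and>
     (\<forall>e \<in> E. \<forall>d \<in> {1..r}. 0 \<le> x1 e d \<and> x1 e d \<le> 1) \<and>
     (\<forall>a b d. {a, b} \<in> E \<and> d \<in> {1..r} \<and> (\<exists>S \<in> HA d. a \<in> S \<and> b \<in> S) \<longrightarrow> x1 {a, b} d = 0)"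
    using x1(1) unfolding PGHA_def mem_Collect_eq .
  note P1 = conjunct1[OF PP]
  note P2 = conjunct1[OF conjunct2[OF PP]]
  note P3 = conjunct1[OF conjunct2[OF conjunct2[OF PP]]]
  note P4 = conjunct1[OF conjunct2[OF conjunct2[OF conjunct2[OF PP]]]]
  note P5 = conjunct1[OF conjunct2[OF conjunct2[OF conjunct2[OF conjunct2[OF PP]]]]]
  note P6 = conjunct2[OF conjunct2[OF conjunct2[OF conjunct2[OF conjunct2[OF PP]]]]]
  have nonneg: "x1 e d \<ge> 0" for e d
  proof (cases "e \<in> Kset V \<and> d \<in> {1..r}")
    case True then show ?thesis using P3 P5 by (cases "e \<in> E") auto
  next
    case False then show ?thesis using P1 by auto
  qed
  have finI: "finite (Kset V \<times> {1..r})" using finite_Kset[OF fin] by simp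
  obtain N :: nat where N: "N \<ge> 1" "\<forall>p\<in>Kset V \<times> {1..r}. real N * x1 (fst p) (snd p) \<in> \<int>"
    using common_den[OF finI, of "\<lambda>p. x1 (fst p) (snd p)"] x1(2) by blast
  have Nint: "real N * x1 e d \<in> \<int>" for e d
  proof (cases "e \<in> Kset V \<and> d \<in> {1..r}")
    case True then show ?thesis using N(2) by force
  next
    case False then show ?thesis using P1 by auto
  qed
  define w where "w d e = nat \<lfloor>real N * x1 e d\<rfloor>" for d e
  have rw: "real (w d e) = real N * x1 e d" for d e
  proof -
    obtain z where z: "real N * x1 e d = of_int z" using Nint[of e d] by (auto elim: Ints_cases)
    have "z \<ge> 0" using z nonneg[of e d] by (metis of_int_0_le_iff zero_le_mult_iff of_nat_0_le_iff)
    then show ?thesis unfolding w_def z by simp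
  qed
  have "\<forall>d\<in>{1..r}. \<exists>Qs. length Qs = N \<and> (\<forall>q\<in>set Qs. perfect_matching_B V (HA d) q \<and> (\<forall>e\<in>q. 0 < w d e)) \<and>
      (\<forall>e. w d e = sum_list (map (\<lambda>q. if e \<in> q then 1 else 0) Qs))"
  proof
    fix d assume d: "d \<in> {1..r}"
    have c: "HA d \<in> Cset V" using HA d by blast
    show "\<exists>Qs. length Qs = N \<and> (\<forall>q\<in>set Qs. perfect_matching_B V (HA d) q \<and> (\<forall>e\<in>q. 0 < w d e)) \<and>
      (\<forall>e. w d e = sum_list (map (\<lambda>q. if e \<in> q then 1 else 0) Qs))"
    proof (rule decomp[OF fin c])
      show "\<forall>e. 0 < w d e \<longrightarrow> e \<in> Bedges (HA d)"
      proof (intro allI impI)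
        fix e assume "0 < w d e"
        then have pos: "x1 e d \<noteq> 0" using rw[of d e] by (metis mult_zero_right of_nat_0_less_iff less_irrefl)
        then have eK: "e \<in> Kset V" using P1 d by blast
        then have eE: "e \<in> E" using P3 d pos by blast
        obtain a b where ab: "e = {a,b}" "a \<in> V" "b \<in> V" "a \<noteq> b" using eK by (auto simp: Kset_def)
        have "\<not> (\<exists>S\<in>HA d. a \<in> S \<and> b \<in> S)" using P6[rule_format, of a b d] eE ab d pos by auto
        then show "e \<in> Bedges (HA d)" using Bedges_I[OF c ab(2,3)] ab(1) by simp
      qed
      show "\<forall>a\<in>V. (\<Sum>b\<in>V-{a}. w d {a,b}) = N"
      proof
        fix a assume a: "a \<in> V"
        have "real (\<Sum>b\<in>V-{a}. w d {a,b}) = (\<Sum>b\<in>V-{a}. real N * x1 {a,b} d)"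
          by (simp add: rw)
        also have "\<dots> = real N * (\<Sum>b\<in>V-{a}. x1 {a,b} d)" by (simp add: sum_distrib_left)
        also have "\<dots> = real N" using P4 d a by simp
        finally show "(\<Sum>b\<in>V-{a}. w d {a,b}) = N" by (simp only: of_nat_eq_iff)
      qed
    qed
  qed
  then obtain Qs where Qs: "\<forall>d\<in>{1..r}. length (Qs d) = N \<and>
      (\<forall>q\<in>set (Qs d). perfect_matching_B V (HA d) q \<and> (\<forall>e\<in>q. 0 < w d e)) \<and>
      (\<forall>e. w d e = sum_list (map (\<lambda>q. if e \<in> q then 1 else 0) (Qs d)))"
    by metis
  define v :: "'a vec" where "v = (\<lambda>i. case i of Inl e \<Rightarrow> (if e \<in> Kset V \<and> e \<in> E then 1 else 0)
      | Inr c \<Rightarrow> (if c \<in> Cset V then card {d\<in>{1..r}. HA d = c} else 0))"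
  define g where "g = (\<lambda>i. \<Sum>d\<in>{1..r}. sum_list (map (\<lambda>q. chi_EC V q (HA d) i) (Qs d)))"
  have gN: "g \<in> Ncomb (PM V)"
    unfolding g_def
  proof (rule Ncomb_sum)
    show "\<forall>d\<in>{1..r}. (\<lambda>i. sum_list (map (\<lambda>q. chi_EC V q (HA d) i) (Qs d))) \<in> Ncomb (PM V)"
    proof
      fix d assume d: "d \<in> {1..r}"
      show "(\<lambda>i. sum_list (map (\<lambda>q. chi_EC V q (HA d) i) (Qs d))) \<in> Ncomb (PM V)"
      proof (rule Ncomb_sum_list, rule ballI)
        fix q assume q: "q \<in> set (Qs d)"
        have pm: "perfect_matching_B V (HA d) q" using Qs d q by blast
        have c: "HA d \<in> Cset V" using HA d by blast
        have "chi_EC V q (HA d) \<in> PM V" unfolding PM_def using pm c by blast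
        then show "chi_EC V q (HA d) \<in> Ncomb (PM V)" by (rule Ncomb_elem)
      qed
    qed
  qed simp
  have sumw: "(\<Sum>d=1..r. w d e) = N * (if e \<in> E then 1 else 0)" if e: "e \<in> Kset V" for e
  proof -
    have "real (\<Sum>d=1..r. w d e) = real N * (\<Sum>d=1..r. x1 e d)" by (simp add: rw sum_distrib_left)
    also have "\<dots> = real (N * (if e \<in> E then 1 else 0))"
    proof (cases "e \<in> E")
      case True then show ?thesis using P2 by simp
    next
      case False then show ?thesis using P3 e by simp
    qed
    finally show ?thesis by (simp only: of_nat_eq_iff)
  qed
  have gv: "g = (\<lambda>i. N * v i)"
  proof
    fix i show "g i = N * v i"
    proof (cases i)
      case (Inl e)
      show ?thesis
      proof (cases "e \<in> Kset V")
        case True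
        have "g i = (\<Sum>d=1..r. w d e)"
          unfolding g_def
        proof (rule sum.cong[OF refl])
          fix d assume d: "d \<in> {1..r}"
          have meq: "map (\<lambda>q. chi_EC V q (HA d) i) (Qs d) = map (\<lambda>q. if e \<in> q then 1 else 0) (Qs d)"
            using True Inl by (simp add: chi_Inl)
          have "w d e = sum_list (map (\<lambda>q. if e \<in> q then 1 else 0) (Qs d))" using Qs d by blast
          then show "sum_list (map (\<lambda>q. chi_EC V q (HA d) i) (Qs d)) = w d e" unfolding meq by simp
        qed
        then show ?thesis using sumw[OF True] True Inl by (simp add: v_def)
      next
        case False then show ?thesis using Inl by (simp add: g_def v_def chi_EC_def)
      qed
    next
      case (Inr c)
      show ?thesis
      proof (cases "c \<in> Cset V")
        case True
        have "g i = (\<Sum>d\<in>{1..r}. N * (if HA d = c then 1 else 0))"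
          unfolding g_def
        proof (rule sum.cong[OF refl])
          fix d assume d: "d \<in> {1..r}"
          have meq: "map (\<lambda>q. chi_EC V q (HA d) i) (Qs d) = map (\<lambda>q. if HA d = c then 1 else 0) (Qs d)"
            using True Inr by (auto simp: chi_Inr)
          have "length (Qs d) = N" using Qs d by blast
          then show "sum_list (map (\<lambda>q. chi_EC V q (HA d) i) (Qs d)) = N * (if HA d = c then 1 else 0)"
            unfolding meq sum_list_const by simp
        qed
        also have "\<dots> = N * card {d\<in>{1..r}. HA d = c}"
          using sum_ind[where 'n=nat, of "{1..r}" "\<lambda>d. HA d = c"] by (simp add: sum_distrib_left[symmetric])
        finally show ?thesis using True Inr by (simp add: v_def)
      next
        case False then show ?thesis using Inr by (simp add: g_def v_def chi_EC_def)
      qed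
    qed
  qed
  have vNbar: "v \<in> Nbar V (PM V)"
    unfolding Nbar_def
  proof (intro CollectI conjI allI impI)
    fix i assume "i \<notin> idx V" then show "v i = 0" by (cases i) (auto simp: v_def idx_def)
  next
    show "\<exists>k. 1 \<le> k \<and> (\<lambda>i. k * v i) \<in> Ncomb (PM V)" using N(1) gN gv by blast
  qed
  have "v \<in> Ncomb (PM V)" using BF vNbar unfolding B_factorizable_def by (auto simp: v_def)
  then obtain S coef where S: "finite S" "S \<subseteq> PM V" "v = (\<lambda>i. \<Sum>m\<in>S. coef m * m i)"
    unfolding Ncomb_def by blast
  define M where "M = mlift S coef"
  have Msum: "sum_mset (image_mset (\<lambda>m. m i) M) = v i" for i
    unfolding M_def mlift_sum[OF S(1)] S(3) by simp
  have "\<exists>q. (\<forall>d\<in>{1..r}. perfect_matching_B V (HA d) (q d)) \<and>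
        (\<forall>e\<in>Kset V. (\<Sum>d=1..r. if e \<in> q d then 1 else 0) = sum_mset (image_mset (\<lambda>m. m (Inl e)) M))"
  proof (rule assign[OF fin])
    show "set_mset M \<subseteq> PM V" using mlift_set[OF S(1)] S(2) unfolding M_def by blast
    show "\<forall>d\<in>{1..r}. HA d \<in> Cset V" by (rule HA)
    show "\<forall>c\<in>Cset V. sum_mset (image_mset (\<lambda>m. m (Inr c)) M) = card {d\<in>{1..r}. HA d = c}"
      using Msum by (simp add: v_def)
  qed
  then obtain q where q: "\<forall>d\<in>{1..r}. perfect_matching_B V (HA d) (q d)"
    "\<forall>e\<in>Kset V. (\<Sum>d=1..r. if e \<in> q d then 1 else 0) = sum_mset (image_mset (\<lambda>m. m (Inl e)) M)" by blast
  have cnt: "\<forall>e\<in>Kset V. (\<Sum>d=1..r. if e \<in> q d then 1 else 0) = (if e \<in> E then 1 else (0::nat))"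
    using q(2) Msum by (simp add: v_def)
  show ?thesis using x_from_q[OF fin EK HA q(1) cnt] by blast
qed


lemma regular_complete:
  assumes "finite V"
  shows "regular_graph V (Kset V) (card V - 1)"
  unfolding regular_graph_def
proof (intro conjI ballI)
  show "Kset V \<subseteq> Kset V" by simp
  fix a assume a: "a \<in> V"
  have "card {e \<in> Kset V. a \<in> e} = card {b\<in>V-{a}. {a,b} \<in> Kset V}"
    by (rule deg_sum[OF assms subset_refl a])
  also have "{b\<in>V-{a}. {a,b} \<in> Kset V} = V - {a}" using a by (auto intro: Kset_pair)
  also have "card (V - {a}) = card V - 1" using a assms by simp
  finally show "card {e \<in> Kset V. a \<in> e} = card V - 1" .
qed

lemma equiv_main:
  fixes V :: "'a set" and E :: "'a set set" and r :: nat
  assumes fin: "finite V" and reg: "regular_graph V E r"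
  shows "B_factorizable V E \<longleftrightarrow>
            (\<forall>HA. HAP_table V r HA \<longrightarrow> PGHA V E r HA \<noteq> {} \<longrightarrow>
                  (\<exists>x \<in> PGHA V E r HA. integral_point x))"
proof
  assume "B_factorizable V E"
  moreover have "E \<subseteq> Kset V" using reg by (simp add: regular_graph_def)
  ultimately show "\<forall>HA. HAP_table V r HA \<longrightarrow> PGHA V E r HA \<noteq> {} \<longrightarrow> (\<exists>x \<in> PGHA V E r HA. integral_point x)"
    using dir1[OF fin] by blast
next
  assume "\<forall>HA. HAP_table V r HA \<longrightarrow> PGHA V E r HA \<noteq> {} \<longrightarrow> (\<exists>x \<in> PGHA V E r HA. integral_point x)"
  then show "B_factorizable V E" using dir2[OF fin reg] by blast
qed

theorem mainTheorem4:
  fixes V :: "'a set" and E :: "'a set set" and r :: nat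
  assumes "finite V" and "even (card V)" and "regular_graph V E r"
  shows "(B_factorizable V E \<longleftrightarrow>
            (\<forall>HA. HAP_table V r HA \<longrightarrow> PGHA V E r HA \<noteq> {} \<longrightarrow>
                  (\<exists>x \<in> PGHA V E r HA. integral_point x)))
       \<and> (B_factorizable V (Kset V) \<longleftrightarrow>
            (\<forall>HA. HAP_table V (card V - 1) HA \<longrightarrow> PGHA V (Kset V) (card V - 1) HA \<noteq> {} \<longrightarrow>
                  (\<exists>x \<in> PGHA V (Kset V) (card V - 1) HA. integral_point x)))"
  using equiv_main[OF assms(1,3)] equiv_main[OF assms(1) regular_complete[OF assms(1)]] by blast

end
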